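(* Let $\phi$ be a smooth nonnegative function on $\mathbb{R}^d$ such that for some $r>0$, $R>0$: $\phi(x)>0$ for $|x|\le r$ and $\phi(x)=0$ for $|x|\ge R$. Let $\Phi$ be smooth with $\Phi\to+\infty$ at infinity, and let $f\ge0$ be a smooth (sufficiently decaying) solution of $$f_t+v\cdot\nabla_xf-\operatorname{div}_v(f\nabla_x\Phi)+\operatorname{div}_v\big(f(\tilde u-v)\big)=0.$$ Let $\mathcal E(t)=\int_{\mathbb{R}^{2d}}(\frac{|v|^2}2+\Phi(x))f(x,v,t)\,dx\,dv$. Then there is a constant $C$ depending only on $\phi$, of order $\frac{\sup_{B_R(0)}\phi}{\inf_{B_r(0)}\phi}\left(\frac Rr\right)^d$, such that $\mathcal E(t)\le\mathcal E(0)e^{Ct}$ for all $t\ge0$.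
   Context: $\rho=\int f\,dv$, $j=\int vf\,dv$; $\tilde\rho=\phi\star\rho=\int\phi(x-y)\rho(y)\,dy$ and $\tilde u=\frac{\int\phi(x-y)j(y)\,dy}{\tilde\rho}$ where $\tilde\rho\ne0$ ($\tilde u=0$ elsewhere). *)

theory Defs
  imports "HOL-Analysis.Analysis"
begin

definition dir_deriv :: "('a::real_normed_vector \<Rightarrow> real) \<Rightarrow> 'a \<Rightarrow> 'a \<Rightarrow> real" where
  "dir_deriv g x e = deriv (\<lambda>s. g (x + s *\<^sub>R e)) 0"

text \<open>Iterated directional derivatives (innermost direction last in the list).\<close>
fun iter_dir_deriv :: "'a::real_normed_vector list \<Rightarrow> ('a \<Rightarrow> real) \<Rightarrow> 'a \<Rightarrow> real" where
  "iter_dir_deriv [] g = g"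
| "iter_dir_deriv (e # es) g = (\<lambda>x. dir_deriv (iter_dir_deriv es g) x e)"

definition smooth_fun :: "('a::euclidean_space \<Rightarrow> real) \<Rightarrow> bool" where
  "smooth_fun g \<longleftrightarrow>
     (\<forall>es. set es \<subseteq> Basis \<longrightarrow>
        continuous_on UNIV (iter_dir_deriv es g) \<and>
        (\<forall>e\<in>Basis. \<forall>x. (\<lambda>s. iter_dir_deriv es g (x + s *\<^sub>R e)) differentiable (at 0)))"

definition grad_d :: "(real^'d \<Rightarrow> real) \<Rightarrow> real^'d \<Rightarrow> real^'d" where
  "grad_d g x = (\<chi> i. dir_deriv g x (axis i 1))"

definition div_d :: "(real^'d \<Rightarrow> real^'d) \<Rightarrow> real^'d \<Rightarrow> real" where
  "div_d F x = (\<Sum>i\<in>UNIV. dir_deriv (\<lambda>y. F y $ i) x (axis i 1))"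

definition rho :: "(real^'d \<Rightarrow> real^'d \<Rightarrow> real \<Rightarrow> real) \<Rightarrow> real^'d \<Rightarrow> real \<Rightarrow> real" where
  "rho f x t = (LINT v|lborel. f x v t)"

definition jflux :: "(real^'d \<Rightarrow> real^'d \<Rightarrow> real \<Rightarrow> real) \<Rightarrow> real^'d \<Rightarrow> real \<Rightarrow> real^'d" where
  "jflux f x t = (LINT v|lborel. f x v t *\<^sub>R v)"

definition rho_tilde :: "(real^'d \<Rightarrow> real) \<Rightarrow> (real^'d \<Rightarrow> real^'d \<Rightarrow> real \<Rightarrow> real) \<Rightarrow> real^'d \<Rightarrow> real \<Rightarrow> real" where
  "rho_tilde \<phi> f x t = (LINT y|lborel. \<phi> (x - y) * rho f y t)"

definition u_tilde :: "(real^'d \<Rightarrow> real) \<Rightarrow> (real^'d \<Rightarrow> real^'d \<Rightarrow> real \<Rightarrow> real) \<Rightarrow> real^'d \<Rightarrow> real \<Rightarrow> real^'d" where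
  "u_tilde \<phi> f x t =
     (if rho_tilde \<phi> f x t \<noteq> 0
      then (1 / rho_tilde \<phi> f x t) *\<^sub>R (LINT y|lborel. \<phi> (x - y) *\<^sub>R jflux f y t)
      else 0)"

definition energy :: "(real^'d \<Rightarrow> real) \<Rightarrow> (real^'d \<Rightarrow> real^'d \<Rightarrow> real \<Rightarrow> real) \<Rightarrow> real \<Rightarrow> real" where
  "energy \<Phi> f t = (LINT z|lborel. (norm (snd z) ^ 2 / 2 + \<Phi> (fst z)) * f (fst z) (snd z) t)"

definition kinetic_eq :: "(real^'d \<Rightarrow> real) \<Rightarrow> (real^'d \<Rightarrow> real) \<Rightarrow> (real^'d \<Rightarrow> real^'d \<Rightarrow> real \<Rightarrow> real) \<Rightarrow> bool" where
  "kinetic_eq \<phi> \<Phi> f \<longleftrightarrow>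
     (\<forall>x v t. t \<ge> 0 \<longrightarrow>
        deriv (\<lambda>s. f x v s) t
        + v \<bullet> grad_d (\<lambda>y. f y v t) x
        - div_d (\<lambda>w. f x w t *\<^sub>R grad_d \<Phi> x) v
        + div_d (\<lambda>w. f x w t *\<^sub>R (u_tilde \<phi> f x t - w)) v = 0)"

end

theory Submission
  imports Defs
begin

lemma mvt_bound:
  fixes f f' :: "real \<Rightarrow> real"
  assumes D: "\<And>t. min a b \<le> t \<Longrightarrow> t \<le> max a b \<Longrightarrow> (f has_real_derivative f' t) (at t)"
    and B: "\<And>t. min a b \<le> t \<Longrightarrow> t \<le> max a b \<Longrightarrow> \<bar>f' t\<bar> \<le> M"
  shows "\<bar>f b - f a\<bar> \<le> M * \<bar>b - a\<bar>"
proof (cases a b rule: linorder_cases)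
  case less
  then obtain z where z: "a < z" "z < b" "f b - f a = (b - a) * f' z"
    using MVT2[of a b f f'] D by auto
  then have "\<bar>f b - f a\<bar> = \<bar>b - a\<bar> * \<bar>f' z\<bar>" by (simp add: abs_mult)
  also have "\<dots> \<le> \<bar>b - a\<bar> * M" using B[of z] z less by (intro mult_left_mono) auto
  finally show ?thesis by (simp add: mult.commute)
next
  case equal then show ?thesis by simp
next
  case greater
  then obtain z where z: "b < z" "z < a" "f a - f b = (a - b) * f' z"
    using MVT2[of b a f f'] D by auto
  then have "\<bar>f b - f a\<bar> = \<bar>b - a\<bar> * \<bar>f' z\<bar>" by (simp add: abs_mult abs_minus_commute)
  also have "\<dots> \<le> \<bar>b - a\<bar> * M" using B[of z] z greater by (intro mult_left_mono) auto
  finally show ?thesis by (simp add: mult.commute)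
qed

lemma int_cc:
  fixes g :: "'a::euclidean_space \<Rightarrow> 'b::{banach,second_countable_topology}"
  assumes "continuous_on UNIV g" "\<And>z. norm z > R \<Longrightarrow> g z = 0"
  shows "integrable lborel g"
proof -
  have "integrable lborel (\<lambda>x. indicator (cball 0 R) x *\<^sub>R g x)"
    by (rule borel_integrable_compact) (auto intro: continuous_on_subset[OF assms(1)])
  also have "(\<lambda>x. indicator (cball 0 R) x *\<^sub>R g x) = g"
    using assms(2) by (auto simp: indicator_def fun_eq_iff not_le)
  finally show ?thesis .
qed

lemma cont_meas: "continuous_on UNIV g \<Longrightarrow> g \<in> borel_measurable lborel"
  by (simp add: borel_measurable_continuous_onI)

lemma integrable_ind_cball: "integrable lborel (\<lambda>z::'a::euclidean_space. M * indicator (cball 0 R) z :: real)"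
  by (intro integrable_mult_right integrable_real_indicator emeasure_bounded_finite) auto

lemma leibniz:
  fixes h h' :: "real \<Rightarrow> 'a::euclidean_space \<Rightarrow> real"
  assumes "\<delta> > 0"
  and D: "\<And>s z. \<bar>s - sa\<bar> < \<delta> \<Longrightarrow> ((\<lambda>s. h s z) has_real_derivative h' s z) (at s)"
  and M: "\<And>s. \<bar>s - sa\<bar> < \<delta> \<Longrightarrow> h s \<in> borel_measurable lborel"
  and M': "h' sa \<in> borel_measurable lborel"
  and I: "\<And>s. \<bar>s - sa\<bar> < \<delta> \<Longrightarrow> integrable lborel (h s)"
  and S: "\<And>s z. \<bar>s - sa\<bar> < \<delta> \<Longrightarrow> norm z > RK \<Longrightarrow> h s z = 0"
  and B: "\<And>s z. \<bar>s - sa\<bar> < \<delta> \<Longrightarrow> norm z \<le> RK \<Longrightarrow> \<bar>h' s z\<bar> \<le> Mb"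
  shows "((\<lambda>s. \<integral>z. h s z \<partial>lborel) has_real_derivative (\<integral>z. h' sa z \<partial>lborel)) (at sa)"
    and "integrable lborel (h' sa)"
proof -
  define F where "F = (\<lambda>s. \<integral>z. h s z \<partial>lborel)"
  have main: "(\<lambda>n. (F (Y n) - F sa) / (Y n - sa)) \<longlonglongrightarrow> (\<integral>z. h' sa z \<partial>lborel) \<and> integrable lborel (h' sa)"
    if Y: "\<And>n. Y n \<noteq> sa" "\<And>n. \<bar>Y n - sa\<bar> < \<delta>" "Y \<longlonglongrightarrow> sa" for Y
  proof -
    define q where "q = (\<lambda>n z. (h (Y n) z - h sa z) / (Y n - sa))"
    have lim: "(\<lambda>n. q n z) \<longlonglongrightarrow> h' sa z" for z
    proof -
      have "((\<lambda>y. (h y z - h sa z) / (y - sa)) \<longlongrightarrow> h' sa z) (at sa)"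
        using D[of sa z] \<open>\<delta> > 0\<close> by (simp add: has_field_derivative_iff)
      then show ?thesis using Y unfolding tendsto_at_iff_sequentially q_def by (auto simp: o_def)
    qed
    have bnd: "norm (q n z) \<le> Mb * indicator (cball 0 RK) z" for n z
    proof (cases "norm z \<le> RK")
      case True
      have "\<bar>h (Y n) z - h sa z\<bar> \<le> Mb * \<bar>Y n - sa\<bar>"
      proof (rule mvt_bound[where f'="\<lambda>s. h' s z"])
        fix t assume "min sa (Y n) \<le> t" "t \<le> max sa (Y n)"
        then have "\<bar>t - sa\<bar> < \<delta>" using Y(2)[of n] by (auto simp: abs_if split: if_splits)
        then show "((\<lambda>s. h s z) has_real_derivative h' t z) (at t)" "\<bar>h' t z\<bar> \<le> Mb"
          using D B True by auto
      qed
      then show ?thesis using True Y(1)[of n]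
        by (simp add: q_def abs_divide divide_le_eq mem_cball)
    next
      case False
      then show ?thesis using S[of "Y n" z] S[of sa z] Y(2)[of n] \<open>\<delta>>0\<close> by (simp add: q_def)
    qed
    have qm: "q n \<in> borel_measurable lborel" for n
    proof -
      have [measurable]: "h (Y n) \<in> borel_measurable lborel" "h sa \<in> borel_measurable lborel"
        using M[of "Y n"] M[of sa] Y(2)[of n] \<open>\<delta>>0\<close> by auto
      show ?thesis unfolding q_def by measurable
    qed
    have "(\<lambda>n. integral\<^sup>L lborel (q n)) \<longlonglongrightarrow> (\<integral>z. h' sa z \<partial>lborel)"
      by (rule integral_dominated_convergence[where s=q, OF M' qm integrable_ind_cball]) (use lim bnd in auto)
    moreover have "integral\<^sup>L lborel (q n) = (F (Y n) - F sa) / (Y n - sa)" for n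
      unfolding q_def F_def using I[of "Y n"] I[of sa] Y(2)[of n] \<open>\<delta>>0\<close>
      by (simp add: integral_diff)
    moreover have "integrable lborel (h' sa)"
      by (rule integrable_dominated_convergence[where s=q, OF M' qm integrable_ind_cball]) (use lim bnd in auto)
    ultimately show ?thesis by simp
  qed
  define Y0 where "Y0 = (\<lambda>n. sa + (\<delta> / 2) * inverse (real (Suc n)))"
  have l0: "Y0 \<longlonglongrightarrow> sa"
    unfolding Y0_def using tendsto_add[OF tendsto_const[of sa] tendsto_mult[OF tendsto_const[of "\<delta>/2"] LIMSEQ_inverse_real_of_nat]] by simp
  have "\<bar>Y0 n - sa\<bar> < \<delta>" for n
  proof -
    have "\<bar>Y0 n - sa\<bar> = (\<delta>/2) * inverse (real (Suc n))" using assms(1) by (simp add: Y0_def abs_mult)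
    also have "\<dots> \<le> \<delta>/2" using assms(1) by (intro mult_left_le) (auto simp: inverse_le_1_iff)
    also have "\<dots> < \<delta>" using assms(1) by simp
    finally show ?thesis .
  qed
  moreover have "Y0 n \<noteq> sa" for n
    using assms(1) by (simp add: Y0_def)
  ultimately show "integrable lborel (h' sa)"
    using main[of Y0] l0 by blast
  have "((\<lambda>y. (F y - F sa) / (y - sa)) \<longlongrightarrow> (\<integral>z. h' sa z \<partial>lborel)) (at sa)"
    unfolding tendsto_at_iff_sequentially
  proof (intro allI impI)
    fix X :: "nat \<Rightarrow> real" assume X: "\<forall>i. X i \<in> UNIV - {sa}" "X \<longlonglongrightarrow> sa"
    have "\<exists>N. \<forall>n\<ge>N. norm (X n - sa) < \<delta>" using X(2) \<open>\<delta>>0\<close> unfolding LIMSEQ_iff by blast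
    then obtain N where N: "\<And>n. n \<ge> N \<Longrightarrow> \<bar>X n - sa\<bar> < \<delta>" by auto
    have "(\<lambda>n. (F (X (n + N)) - F sa) / (X (n + N) - sa)) \<longlonglongrightarrow> (\<integral>z. h' sa z \<partial>lborel)"
    proof -
      have "\<And>n. X (n + N) \<noteq> sa" using X(1) by auto
      moreover have "\<And>n. \<bar>X (n + N) - sa\<bar> < \<delta>" using N by simp
      moreover have "(\<lambda>n. X (n + N)) \<longlonglongrightarrow> sa" using LIMSEQ_ignore_initial_segment[OF X(2), of N] .
      ultimately show ?thesis by (rule main[THEN conjunct1])
    qed
    then show "((\<lambda>y. (F y - F sa) / (y - sa)) \<circ> X) \<longlonglongrightarrow> (\<integral>z. h' sa z \<partial>lborel)"
      unfolding comp_def by (rule LIMSEQ_offset[where k=N])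
  qed
  then show "((\<lambda>s. \<integral>z. h s z \<partial>lborel) has_real_derivative (\<integral>z. h' sa z \<partial>lborel)) (at sa)"
    unfolding F_def has_field_derivative_iff by simp
qed

lemma cont_bounded_on:
  fixes g :: "'a::euclidean_space \<Rightarrow> 'b::real_normed_vector"
  assumes "continuous_on UNIV g"
  shows "\<exists>M. \<forall>z. norm z \<le> R \<longrightarrow> norm (g z) \<le> M"
proof -
  have "compact (g ` cball 0 R)"
    by (intro compact_continuous_image continuous_on_subset[OF assms]) auto
  then obtain M where "\<forall>x\<in>g ` cball 0 R. norm x \<le> M"
    using compact_imp_bounded bounded_iff by metis
  then show ?thesis by (intro exI[of _ M]) auto
qed

lemma translate_integral:
  fixes G :: "'a::euclidean_space \<Rightarrow> real"
  assumes "G \<in> borel_measurable borel"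
  shows "(\<integral>z. G (z + c) \<partial>lborel) = (\<integral>z. G z \<partial>lborel)"
proof -
  have "(\<integral>z. G z \<partial>lborel) = (\<integral>z. G z \<partial>(distr lborel borel ((+) c)))"
    by (simp add: lborel_distr_plus)
  also have "\<dots> = (\<integral>z. G (c + z) \<partial>lborel)"
    by (rule integral_distr) (auto simp: assms)
  finally show ?thesis by (simp add: add.commute)
qed

lemma ibp:
  fixes G D :: "'a::euclidean_space \<Rightarrow> real"
  assumes cG: "continuous_on UNIV G" and cD: "continuous_on UNIV D"
   and dG: "\<And>z s. ((\<lambda>s. G (z + s *\<^sub>R w)) has_real_derivative D (z + s *\<^sub>R w)) (at s)"
   and sG: "\<And>z. norm z > RK \<Longrightarrow> G z = 0"
  shows "integrable lborel D" "(\<integral>z. D z \<partial>lborel) = 0"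
proof -
  obtain Mb where Mb: "\<And>z. norm z \<le> RK + 2 * norm w \<Longrightarrow> norm (D z) \<le> Mb"
    using cont_bounded_on[OF cD, of "RK + 2 * norm w"] by auto
  have cGs: "continuous_on UNIV (\<lambda>z. G (z + s *\<^sub>R w))" for s
    by (intro continuous_on_compose2[OF cG]) (auto intro!: continuous_intros)
  have cDs: "continuous_on UNIV (\<lambda>z. D (z + s *\<^sub>R w))" for s
    by (intro continuous_on_compose2[OF cD]) (auto intro!: continuous_intros)
  have nrm: "norm (z + s *\<^sub>R w) > RK" if "norm z > RK + norm w" "\<bar>s - 0\<bar> < 1" for z s
  proof -
    have "norm (s *\<^sub>R w) \<le> norm w" using that(2) by (auto intro!: mult_left_le_one_le)
    then show ?thesis using that norm_triangle_ineq2[of z "- s *\<^sub>R w"] by auto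
  qed
  note L = leibniz[where h="\<lambda>s z. G (z + s *\<^sub>R w)" and h'="\<lambda>s z. D (z + s *\<^sub>R w)" and sa=0 and \<delta>=1
     and RK="RK + norm w" and Mb=Mb]
  have hyps: "\<And>s z. \<bar>s - 0\<bar> < 1 \<Longrightarrow> ((\<lambda>s. G (z + s *\<^sub>R w)) has_real_derivative D (z + s *\<^sub>R w)) (at s)"
    "\<And>s. \<bar>s - 0\<bar> < 1 \<Longrightarrow> (\<lambda>z. G (z + s *\<^sub>R w)) \<in> borel_measurable lborel"
    "(\<lambda>z. D (z + 0 *\<^sub>R w)) \<in> borel_measurable lborel"
    "\<And>s. \<bar>s - 0\<bar> < 1 \<Longrightarrow> integrable lborel (\<lambda>z. G (z + s *\<^sub>R w))"
    "\<And>s z. \<bar>s - 0\<bar> < 1 \<Longrightarrow> norm z > RK + norm w \<Longrightarrow> G (z + s *\<^sub>R w) = 0"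
    "\<And>s z. \<bar>s - 0\<bar> < 1 \<Longrightarrow> norm z \<le> RK + norm w \<Longrightarrow> \<bar>D (z + s *\<^sub>R w)\<bar> \<le> Mb"
  proof -
    show "\<And>s z. ((\<lambda>s. G (z + s *\<^sub>R w)) has_real_derivative D (z + s *\<^sub>R w)) (at s)" by (rule dG)
    show "\<And>s. (\<lambda>z. G (z + s *\<^sub>R w)) \<in> borel_measurable lborel" by (rule cont_meas[OF cGs])
    show "(\<lambda>z. D (z + 0 *\<^sub>R w)) \<in> borel_measurable lborel" by (rule cont_meas[OF cDs])
    show "\<And>s z. \<bar>s - 0\<bar> < 1 \<Longrightarrow> norm z > RK + norm w \<Longrightarrow> G (z + s *\<^sub>R w) = 0"
      using nrm sG by blast
    then show "\<And>s. \<bar>s - 0\<bar> < 1 \<Longrightarrow> integrable lborel (\<lambda>z. G (z + s *\<^sub>R w))"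
      using int_cc[OF cGs] by blast
    show "\<bar>D (z + s *\<^sub>R w)\<bar> \<le> Mb" if "\<bar>s - 0\<bar> < 1" "norm z \<le> RK + norm w" for s z
    proof -
      have "norm (s *\<^sub>R w) \<le> norm w" using that(1) by (auto intro!: mult_left_le_one_le)
      then have "norm (z + s *\<^sub>R w) \<le> RK + 2 * norm w" using that(2) norm_triangle_ineq[of z "s *\<^sub>R w"] by auto
      then show ?thesis using Mb by fastforce
    qed
  qed
  from L[OF _ hyps] show "integrable lborel D" by simp
  have "((\<lambda>s. \<integral>z. G (z + s *\<^sub>R w) \<partial>lborel) has_real_derivative (\<integral>z. D z \<partial>lborel)) (at 0)"
    using L[OF _ hyps] by simp
  moreover have "(\<lambda>s. \<integral>z. G (z + s *\<^sub>R w) \<partial>lborel) = (\<lambda>s. \<integral>z. G z \<partial>lborel)"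
    using translate_integral borel_measurable_continuous_onI[OF cG] by auto
  ultimately have "((\<lambda>s. \<integral>z. G z \<partial>lborel) has_real_derivative (\<integral>z. D z \<partial>lborel)) (at 0)" by simp
  then show "(\<integral>z. D z \<partial>lborel) = 0"
    using DERIV_const DERIV_unique by blast
qed

lemma param_cont:
  fixes g :: "'a::euclidean_space \<times> 'b::euclidean_space \<Rightarrow> 'c::{banach,second_countable_topology}"
  assumes S: "closed S" and cg: "continuous_on (S \<times> UNIV) g"
    and sg: "\<And>y v. y \<in> S \<Longrightarrow> norm v > B \<Longrightarrow> g (y,v) = 0"
  shows "continuous_on S (\<lambda>y. \<integral>v. g (y,v) \<partial>lborel)"
proof (rule continuous_on_sequentiallyI)
  fix u a assume u: "\<forall>n. u n \<in> S" "a \<in> S" "u \<longlonglongrightarrow> a"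
  define C where "C = (S \<inter> cball a 1) \<times> cball (0::'b) B"
  have "compact C" unfolding C_def using S by (intro compact_Times closed_Int_compact) auto
  moreover have "continuous_on C g" by (rule continuous_on_subset[OF cg]) (auto simp: C_def)
  ultimately have "compact (g ` C)" by (rule compact_continuous_image[rotated])
  then obtain M where M: "\<And>p. p \<in> C \<Longrightarrow> norm (g p) \<le> M"
    using compact_imp_bounded bounded_iff by (metis imageI)
  have "\<exists>N. \<forall>n\<ge>N. dist (u n) a < 1" using u(3) unfolding LIMSEQ_def by simp
  then obtain N where N: "\<And>n. n \<ge> N \<Longrightarrow> dist (u n) a < 1" by blast
  define w where "w = (\<lambda>n. u (n + N))"
  have wS: "w n \<in> S" for n using u by (simp add: w_def)
  have wlim: "w \<longlonglongrightarrow> a" unfolding w_def by (rule LIMSEQ_ignore_initial_segment[OF u(3)])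
  have cy: "continuous_on UNIV (\<lambda>v. g (y, v))" if "y \<in> S" for y
    by (rule continuous_on_compose2[OF cg]) (use that in \<open>auto intro!: continuous_intros\<close>)
  have "(\<lambda>n. \<integral>v. g (w n, v) \<partial>lborel) \<longlonglongrightarrow> (\<integral>v. g (a, v) \<partial>lborel)"
  proof (rule integral_dominated_convergence[where s="\<lambda>n (v::'b). g (w n, v)" and w="\<lambda>v::'b. M * indicator (cball 0 B) v"])
    show "(\<lambda>v. g (a, v)) \<in> borel_measurable lborel" by (rule cont_meas[OF cy[OF u(2)]])
    show "\<And>n. (\<lambda>v. g (w n, v)) \<in> borel_measurable lborel" by (rule cont_meas[OF cy[OF wS]])
    show "integrable lborel (\<lambda>v. M * indicator (cball 0 B) v)" by (rule integrable_ind_cball)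
    show "AE (v::'b) in lborel. (\<lambda>n. g (w n, v)) \<longlonglongrightarrow> g (a, v)"
    proof (rule AE_I2)
      fix v :: 'b
      have "((\<lambda>n. (w n, v)) \<longlongrightarrow> (a, v)) sequentially" by (intro tendsto_Pair wlim tendsto_const)
      then show "(\<lambda>n. g (w n, v)) \<longlonglongrightarrow> g (a, v)"
        by (rule continuous_on_tendsto_compose[OF cg]) (use u(2) wS in auto)
    qed
    show "AE (v::'b) in lborel. norm (g (w n, v)) \<le> M * indicator (cball 0 B) v" for n
    proof (rule AE_I2)
      fix v :: 'b show "norm (g (w n, v)) \<le> M * indicator (cball 0 B) v"
      proof (cases "norm v \<le> B")
        case True
        have "(w n, v) \<in> C" using True wS[of n] N[of "n + N"] by (auto simp: C_def w_def dist_commute)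
        then show ?thesis using M True by auto
      next
        case False then show ?thesis using sg[OF wS[of n], of v] by auto
      qed
    qed
  qed
  then show "(\<lambda>n. \<integral>v. g (u n, v) \<partial>lborel) \<longlonglongrightarrow> (\<integral>v. g (a, v) \<partial>lborel)"
    unfolding w_def by (rule LIMSEQ_offset[where k=N])
qed

lemma smooth_cont: "smooth_fun g \<Longrightarrow> continuous_on UNIV g"
  unfolding smooth_fun_def by (metis empty_subsetI iter_dir_deriv.simps(1) list.set(1))

lemma smooth_cont1: "smooth_fun g \<Longrightarrow> e \<in> Basis \<Longrightarrow> continuous_on UNIV (iter_dir_deriv [e] g)"
  unfolding smooth_fun_def by (metis empty_subsetI insert_subset list.set(1) list.set(2))

lemma smooth_line:
  assumes "smooth_fun g" "e \<in> Basis"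
  shows "((\<lambda>s. g (p + s *\<^sub>R e)) has_real_derivative iter_dir_deriv [e] g (p + s *\<^sub>R e)) (at s)"
proof -
  let ?q = "p + s *\<^sub>R e"
  have "(\<lambda>\<sigma>. iter_dir_deriv [] g (?q + \<sigma> *\<^sub>R e)) differentiable (at 0)"
    using assms unfolding smooth_fun_def by (metis empty_subsetI list.set(1))
  then have "(\<lambda>\<sigma>. g (?q + \<sigma> *\<^sub>R e)) differentiable (at 0)" by simp
  then have "((\<lambda>\<sigma>. g (?q + \<sigma> *\<^sub>R e)) has_real_derivative dir_deriv g ?q e) (at 0)"
    unfolding dir_deriv_def by (simp add: DERIV_deriv_iff_real_differentiable)
  then have "((\<lambda>\<sigma>. g (p + (\<sigma> + s) *\<^sub>R e)) has_real_derivative dir_deriv g ?q e) (at 0)"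
    by (simp add: algebra_simps scaleR_add_left)
  then show ?thesis using DERIV_shift[of "\<lambda>\<sigma>. g (p + \<sigma> *\<^sub>R e)" _ 0 s] by simp
qed

lemma basis_t: "((0::real^'d, 0::real^'d), 1::real) \<in> Basis"
  by (simp add: Basis_prod_def zero_prod_def)
lemma basis_x: "((axis i 1 :: real^'d, 0::real^'d), 0::real) \<in> Basis"
  by (simp add: Basis_prod_def)
lemma basis_v: "((0::real^'d, axis i 1 :: real^'d), 0::real) \<in> Basis"
  by (simp add: Basis_prod_def)
lemma basis_a: "(axis i 1 :: real^'d) \<in> Basis"
  by simp

lemma dir_deriv_eq: "((\<lambda>s. g (x + s *\<^sub>R e)) has_real_derivative D) (at 0) \<Longrightarrow> dir_deriv g x e = D"
  unfolding dir_deriv_def by (rule DERIV_imp_deriv)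

lemma norm_axis_sq: "norm (v + s *\<^sub>R axis i 1)^2 = norm v ^ 2 + 2 * s * v $ i + s^2" for v :: "real^'d"
  by (simp add: power2_norm_eq_inner inner_add_left inner_add_right inner_axis inner_commute)
     (simp add: inner_axis_axis algebra_simps power2_eq_square)

locale setting =
  fixes \<phi> :: "real^'d \<Rightarrow> real" and r R :: real and \<Phi> :: "real^'d \<Rightarrow> real"
    and f :: "real^'d \<Rightarrow> real^'d \<Rightarrow> real \<Rightarrow> real"
  assumes s\<phi>: "smooth_fun \<phi>" and \<phi>nn: "\<And>x. \<phi> x \<ge> 0" and r: "r > 0" and R: "R > 0"
   and \<phi>pos: "\<And>x. norm x \<le> r \<Longrightarrow> \<phi> x > 0" and \<phi>zero: "\<And>x. norm x \<ge> R \<Longrightarrow> \<phi> x = 0"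
   and s\<Phi>: "smooth_fun \<Phi>" and \<Phi>nn: "\<And>x. \<Phi> x \<ge> 0"
   and sF: "smooth_fun (\<lambda>((x, v), t). f x v t)"
   and fnn: "\<And>x v t. f x v t \<ge> 0"
   and supp: "\<And>T. T \<ge> 0 \<Longrightarrow> \<exists>B. \<forall>x v t. 0 \<le> t \<and> t \<le> T \<and> f x v t \<noteq> 0 \<longrightarrow> norm x \<le> B \<and> norm v \<le> B"
   and keq: "kinetic_eq \<phi> \<Phi> f"
begin

definition "F = (\<lambda>((x, v), t). f x v t)"
definition "ft x v t = iter_dir_deriv [((0,0),1)] F ((x,v),t)"
definition "fx i x v t = iter_dir_deriv [((axis i 1,0),0)] F ((x,v),t)"
definition "fv i x v t = iter_dir_deriv [((0,axis i 1),0)] F ((x,v),t)"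
definition "dP i x = iter_dir_deriv [axis i 1] \<Phi> x"

lemma F_app[simp]: "F ((x,v),t) = f x v t" by (simp add: F_def)

lemma cF: "continuous_on UNIV F" using smooth_cont[OF sF] by (simp add: F_def)
lemma cFt: "continuous_on UNIV (\<lambda>p. ft (fst (fst p)) (snd (fst p)) (snd p))"
  using smooth_cont1[OF sF[folded F_def] basis_t] by (simp add: ft_def)
lemma cFx: "continuous_on UNIV (\<lambda>p. fx i (fst (fst p)) (snd (fst p)) (snd p))"
  using smooth_cont1[OF sF[folded F_def] basis_x] by (simp add: fx_def)
lemma cFv: "continuous_on UNIV (\<lambda>p. fv i (fst (fst p)) (snd (fst p)) (snd p))"
  using smooth_cont1[OF sF[folded F_def] basis_v] by (simp add: fv_def)
lemma cP: "continuous_on UNIV \<Phi>" using smooth_cont[OF s\<Phi>] .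
lemma cdP: "continuous_on UNIV (dP i)" using smooth_cont1[OF s\<Phi> basis_a] by (simp add: dP_def[abs_def])
lemma c\<phi>: "continuous_on UNIV \<phi>" using smooth_cont[OF s\<phi>] .

lemma d_t: "((\<lambda>s. f x v s) has_real_derivative ft x v s) (at s)"
  using smooth_line[OF sF[folded F_def] basis_t, where p="((x,v),0)" and s=s] by (simp add: ft_def)
lemma d_x: "((\<lambda>s. f (x + s *\<^sub>R axis i 1) v t) has_real_derivative fx i (x + s *\<^sub>R axis i 1) v t) (at s)"
  using smooth_line[OF sF[folded F_def] basis_x, where p="((x,v),t)" and s=s] by (simp add: fx_def)
lemma d_v: "((\<lambda>s. f x (v + s *\<^sub>R axis i 1) t) has_real_derivative fv i x (v + s *\<^sub>R axis i 1) t) (at s)"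
  using smooth_line[OF sF[folded F_def] basis_v, where p="((x,v),t)" and s=s] by (simp add: fv_def)
lemma d_P: "((\<lambda>s. \<Phi> (x + s *\<^sub>R axis i 1)) has_real_derivative dP i (x + s *\<^sub>R axis i 1)) (at s)"
  using smooth_line[OF s\<Phi> basis_a, where p=x and s=s] by (simp add: dP_def)

lemma kin:
  assumes "t \<ge> 0"
  shows "ft x v t = - (\<Sum>i\<in>UNIV. v $ i * fx i x v t) + (\<Sum>i\<in>UNIV. dP i x * fv i x v t)
     - (\<Sum>i\<in>UNIV. fv i x v t * (u_tilde \<phi> f x t $ i - v $ i) - f x v t)"
proof -
  let ?U = "u_tilde \<phi> f x t"
  have 1: "deriv (\<lambda>s. f x v s) t = ft x v t" by (rule DERIV_imp_deriv[OF d_t])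
  have 2: "v \<bullet> grad_d (\<lambda>y. f y v t) x = (\<Sum>i\<in>UNIV. v $ i * fx i x v t)"
    unfolding grad_d_def inner_vec_def
    by (intro sum.cong refl) (simp add: dir_deriv_eq[OF d_x[where s=0, simplified]])
  have 3: "div_d (\<lambda>w. f x w t *\<^sub>R grad_d \<Phi> x) v = (\<Sum>i\<in>UNIV. dP i x * fv i x v t)"
    unfolding div_d_def
  proof (intro sum.cong refl)
    fix i
    have "((\<lambda>s. (f x (v + s *\<^sub>R axis i 1) t *\<^sub>R grad_d \<Phi> x) $ i) has_real_derivative
        fv i x v t * grad_d \<Phi> x $ i) (at 0)"
      using DERIV_cmult_right[OF d_v[of x v i t 0], of "grad_d \<Phi> x $ i"] by simp
    moreover have "grad_d \<Phi> x $ i = dP i x"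
      unfolding grad_d_def by (simp add: dir_deriv_eq[OF d_P[where s=0, simplified]])
    ultimately show "dir_deriv (\<lambda>y. (f x y t *\<^sub>R grad_d \<Phi> x) $ i) v (axis i 1) = dP i x * fv i x v t"
      by (simp add: dir_deriv_eq mult.commute)
  qed
  have 4: "div_d (\<lambda>w. f x w t *\<^sub>R (?U - w)) v = (\<Sum>i\<in>UNIV. fv i x v t * (?U $ i - v $ i) - f x v t)"
    unfolding div_d_def
  proof (intro sum.cong refl)
    fix i
    have "((\<lambda>s. f x (v + s *\<^sub>R axis i 1) t * (?U $ i - (v $ i + s))) has_real_derivative
        fv i x v t * (?U $ i - v $ i) - f x v t) (at 0)"
      by (auto intro!: derivative_eq_intros d_v[where s=0, simplified])
    then show "dir_deriv (\<lambda>y. (f x y t *\<^sub>R (?U - y)) $ i) v (axis i 1) = fv i x v t * (?U $ i - v $ i) - f x v t"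
      by (intro dir_deriv_eq) (simp add: axis_def)
  qed
  have "deriv (\<lambda>s. f x v s) t + v \<bullet> grad_d (\<lambda>y. f y v t) x
        - div_d (\<lambda>w. f x w t *\<^sub>R grad_d \<Phi> x) v + div_d (\<lambda>w. f x w t *\<^sub>R (?U - w)) v = 0"
    using keq assms unfolding kinetic_eq_def by blast
  then show ?thesis unfolding 1 2 3 4 by linarith
qed

end

lemma cont_comp_UNIV: "continuous_on UNIV g \<Longrightarrow> continuous_on UNIV h \<Longrightarrow> continuous_on UNIV (\<lambda>x. g (h x))"
  by (rule continuous_on_compose2) auto

definition cc2 :: "real \<Rightarrow> ('a::euclidean_space \<times> 'b::euclidean_space \<Rightarrow> 'c::{banach,second_countable_topology}) \<Rightarrow> bool" where
  "cc2 B g \<longleftrightarrow> continuous_on UNIV g \<and> (\<forall>y v. (norm y > B \<or> norm v > B) \<longrightarrow> g (y,v) = 0)"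

lemma cc2_int_v: "cc2 B g \<Longrightarrow> integrable lborel (\<lambda>v. g (y,v))"
  unfolding cc2_def
  by (rule int_cc[where R=B]) (auto intro!: cont_comp_UNIV[where g=g] continuous_intros)

lemma cc2_int_Z: "cc2 B g \<Longrightarrow> integrable lborel g"
proof (unfold cc2_def, rule int_cc[where R="2*B"], simp)
  fix z :: "'a \<times> 'b" assume "continuous_on UNIV g \<and> (\<forall>y v. (norm y > B \<or> norm v > B) \<longrightarrow> g (y,v) = 0)" "2*B < norm z"
  moreover have "norm z \<le> norm (fst z) + norm (snd z)" using norm_Pair_le[of "fst z" "snd z"] by simp
  ultimately have "norm (fst z) > B \<or> norm (snd z) > B" by linarith
  then show "g z = 0" using \<open>continuous_on UNIV g \<and> _\<close> by (metis prod.collapse)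
qed

lemma cc2_cont_inner: "cc2 B g \<Longrightarrow> continuous_on UNIV (\<lambda>y. \<integral>v. g (y,v) \<partial>lborel)"
  unfolding cc2_def by (rule param_cont[where B=B]) auto

lemma cc2_inner_zero: "cc2 B g \<Longrightarrow> norm y > B \<Longrightarrow> (\<integral>v. g (y,v) \<partial>lborel) = 0"
  unfolding cc2_def by (simp add: integral_eq_zero_AE)

lemma cc2_conv_int:
  assumes "cc2 B g" "continuous_on UNIV \<psi>"
  shows "integrable lborel (\<lambda>y. \<psi> y *\<^sub>R (\<integral>v. g (y,v) \<partial>lborel))"
proof (rule int_cc[where R=B])
  show "continuous_on UNIV (\<lambda>y. \<psi> y *\<^sub>R (\<integral>v. g (y,v) \<partial>lborel))"
    using assms cc2_cont_inner[OF assms(1)] by (intro continuous_intros) auto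
  show "norm y > B \<Longrightarrow> \<psi> y *\<^sub>R (\<integral>v. g (y,v) \<partial>lborel) = 0" for y
    using cc2_inner_zero[OF assms(1)] by simp
qed

lemma cc2_fubini: "cc2 B g \<Longrightarrow> (\<integral>y. \<integral>v. g (y,v) \<partial>lborel \<partial>lborel) = (\<integral>z. g z \<partial>lborel)"
  using lborel_pair.integral_fst'[of g] cc2_int_Z[of B g] by (simp add: lborel_prod)

lemma cc2_scale: "cc2 B g \<Longrightarrow> continuous_on UNIV h \<Longrightarrow> cc2 B (\<lambda>z. h z *\<^sub>R g z)"
  unfolding cc2_def by (auto intro!: continuous_intros)

lemma cc2_mult: "cc2 B g \<Longrightarrow> continuous_on UNIV h \<Longrightarrow> cc2 B (\<lambda>z. g z * h z :: real)"
  unfolding cc2_def by (auto intro!: continuous_intros)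

context setting
begin

lemma suppB: "T \<ge> 0 \<Longrightarrow> \<exists>B>0. \<forall>x v t. 0 \<le> t \<longrightarrow> t \<le> T \<longrightarrow> (norm x > B \<or> norm v > B) \<longrightarrow> f x v t = 0"
proof -
  assume "T \<ge> 0"
  then obtain B where B: "\<forall>x v t. 0 \<le> t \<and> t \<le> T \<and> f x v t \<noteq> 0 \<longrightarrow> norm x \<le> B \<and> norm v \<le> B"
    using supp by blast
  show ?thesis
  proof (rule exI[of _ "max B 1"], intro conjI allI impI)
    fix x v :: "real^'d" and t :: real assume "0 \<le> t" "t \<le> T" "max B 1 < norm x \<or> max B 1 < norm v"
    show "f x v t = 0"
    proof (rule ccontr)
      assume "f x v t \<noteq> 0"
      then have "norm x \<le> B \<and> norm v \<le> B" using B \<open>0 \<le> t\<close> \<open>t \<le> T\<close> by blast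
      then show False using \<open>max B 1 < norm x \<or> max B 1 < norm v\<close> by linarith
    qed
  qed simp
qed

lemma cont_f: "continuous_on UNIV (\<lambda>z. f (fst z) (snd z) s)"
proof -
  have "continuous_on UNIV (\<lambda>z. F (z, s))" by (rule cont_comp_UNIV[OF cF]) (intro continuous_intros)
  then show ?thesis by (simp add: F_def case_prod_beta)
qed

lemma cont_ft: "continuous_on UNIV (\<lambda>z. ft (fst z) (snd z) s)"
  using cont_comp_UNIV[OF cFt, of "\<lambda>z. (z, s)"] by (simp add: continuous_on_Pair continuous_on_id continuous_on_const)

lemma cont_fx: "continuous_on UNIV (\<lambda>z. fx i (fst z) (snd z) s)"
  using cont_comp_UNIV[OF cFx, of "\<lambda>z. (z, s)"] by (simp add: continuous_on_Pair continuous_on_id continuous_on_const)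

lemma cont_fv: "continuous_on UNIV (\<lambda>z. fv i (fst z) (snd z) s)"
  using cont_comp_UNIV[OF cFv, of "\<lambda>z. (z, s)"] by (simp add: continuous_on_Pair continuous_on_id continuous_on_const)

lemma cc2_f:
  assumes fz: "\<And>x v. norm x > B \<or> norm v > B \<Longrightarrow> f x v s = 0"
  shows "cc2 B (\<lambda>z. f (fst z) (snd z) s)"
  unfolding cc2_def using cont_f fz by auto

definition "W z = norm (snd z) ^ 2 / 2 + \<Phi> (fst z)"

lemma cW: "continuous_on UNIV W"
  unfolding W_def by (intro continuous_intros cont_comp_UNIV[OF cP]) auto

lemma energy_W: "energy \<Phi> f t = (\<integral>z. W z * f (fst z) (snd z) t \<partial>lborel)"
  unfolding energy_def W_def ..

end

context setting begin

lemma norm_z_big: "norm z > 2 * B \<Longrightarrow> norm (fst z) > B \<or> norm (snd z) > B" for z :: "'a::real_normed_vector \<times> 'b::real_normed_vector"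
proof -
  assume "norm z > 2 * B"
  moreover have "norm z \<le> norm (fst z) + norm (snd z)" using norm_Pair_le[of "fst z" "snd z"] by simp
  ultimately show ?thesis by linarith
qed

lemma energy_deriv:
  assumes "0 < s0"
  shows "((\<lambda>s. energy \<Phi> f s) has_real_derivative (\<integral>z. W z * ft (fst z) (snd z) s0 \<partial>lborel)) (at s0)"
    "integrable lborel (\<lambda>z. W z * ft (fst z) (snd z) s0)"
proof -
  obtain B where B: "B > 0" "\<And>x v t. 0 \<le> t \<Longrightarrow> t \<le> s0 + 1 \<Longrightarrow> (norm x > B \<or> norm v > B) \<Longrightarrow> f x v t = 0"
    using suppB[of "s0 + 1"] assms by auto
  have cg: "continuous_on UNIV (\<lambda>p::real \<times> ((real^'d) \<times> (real^'d)). W (snd p) * ft (fst (snd p)) (snd (snd p)) (fst p))"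
  proof -
    have "continuous_on UNIV (\<lambda>p::real \<times> ((real^'d) \<times> (real^'d)). ft (fst (fst (snd p, fst p))) (snd (fst (snd p, fst p))) (snd (snd p, fst p)))"
      by (rule cont_comp_UNIV[OF cFt]) (intro continuous_intros)
    then show ?thesis by (intro continuous_intros cont_comp_UNIV[OF cW]) auto
  qed
  obtain Mb where Mb0: "\<forall>p. norm p \<le> s0 + 1 + 2 * B \<longrightarrow> norm (W (snd p) * ft (fst (snd p)) (snd (snd p)) (fst p)) \<le> Mb"
    using cont_bounded_on[OF cg, of "s0 + 1 + 2 * B"] by blast
  note Mb = Mb0[rule_format]
  define \<delta> where "\<delta> = min s0 1"
  have \<delta>: "\<delta> > 0" using assms by (simp add: \<delta>_def)
  have sr: "0 \<le> s" "s \<le> s0 + 1" if "\<bar>s - s0\<bar> < \<delta>" for s using that by (auto simp: \<delta>_def)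
  note L = leibniz[where h="\<lambda>s z. W z * f (fst z) (snd z) s" and h'="\<lambda>s z. W z * ft (fst z) (snd z) s"
    and sa=s0 and \<delta>=\<delta> and RK="2*B" and Mb=Mb]
  have hyps:
    "\<And>s z. \<bar>s - s0\<bar> < \<delta> \<Longrightarrow> ((\<lambda>s. W z * f (fst z) (snd z) s) has_real_derivative W z * ft (fst z) (snd z) s) (at s)"
    "\<And>s. \<bar>s - s0\<bar> < \<delta> \<Longrightarrow> (\<lambda>z. W z * f (fst z) (snd z) s) \<in> borel_measurable lborel"
    "(\<lambda>z. W z * ft (fst z) (snd z) s0) \<in> borel_measurable lborel"
    "\<And>s. \<bar>s - s0\<bar> < \<delta> \<Longrightarrow> integrable lborel (\<lambda>z. W z * f (fst z) (snd z) s)"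
    "\<And>s z. \<bar>s - s0\<bar> < \<delta> \<Longrightarrow> 2 * B < norm z \<Longrightarrow> W z * f (fst z) (snd z) s = 0"
    "\<And>s z. \<bar>s - s0\<bar> < \<delta> \<Longrightarrow> norm z \<le> 2 * B \<Longrightarrow> \<bar>W z * ft (fst z) (snd z) s\<bar> \<le> Mb"
  proof -
    show "\<And>s z. ((\<lambda>s. W z * f (fst z) (snd z) s) has_real_derivative W z * ft (fst z) (snd z) s) (at s)"
      by (rule DERIV_cmult[OF d_t])
    show "\<And>s. (\<lambda>z. W z * f (fst z) (snd z) s) \<in> borel_measurable lborel"
      by (rule cont_meas) (intro continuous_intros cW cont_f)
    show "(\<lambda>z. W z * ft (fst z) (snd z) s0) \<in> borel_measurable lborel"
      by (rule cont_meas) (intro continuous_intros cW cont_ft)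
    show zz: "W z * f (fst z) (snd z) s = 0" if "\<bar>s - s0\<bar> < \<delta>" "2 * B < norm z" for s z
    proof -
      have "f (fst z) (snd z) s = 0" by (rule B(2)[OF sr[OF that(1)] norm_z_big[OF that(2)]])
      then show ?thesis by simp
    qed
    show "integrable lborel (\<lambda>z. W z * f (fst z) (snd z) s)" if "\<bar>s - s0\<bar> < \<delta>" for s
      by (rule int_cc[where R="2*B"]) (intro continuous_intros cW cont_f, erule zz[OF that])
    show "\<bar>W z * ft (fst z) (snd z) s\<bar> \<le> Mb" if "\<bar>s - s0\<bar> < \<delta>" "norm z \<le> 2 * B" for s z
    proof -
      have "norm (s, z) \<le> s0 + 1 + 2 * B" using norm_Pair_le[of s z] that sr[OF that(1)] by simp
      then show ?thesis using Mb[of "(s,z)"] by simp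
    qed
  qed
  show "((\<lambda>s. energy \<Phi> f s) has_real_derivative (\<integral>z. W z * ft (fst z) (snd z) s0 \<partial>lborel)) (at s0)"
    unfolding energy_W using L[OF \<delta> hyps] by simp
  show "integrable lborel (\<lambda>z. W z * ft (fst z) (snd z) s0)"
    using L[OF \<delta> hyps] by simp
qed

end

context setting begin

lemma dG1: "((\<lambda>\<sigma>. W (z + \<sigma> *\<^sub>R (axis i 1, 0)) * (snd (z + \<sigma> *\<^sub>R (axis i 1, 0))) $ i * f (fst (z + \<sigma> *\<^sub>R (axis i 1, 0))) (snd (z + \<sigma> *\<^sub>R (axis i 1, 0))) s)
   has_real_derivative
   (\<lambda>z. dP i (fst z) * (snd z) $ i * f (fst z) (snd z) s + W z * (snd z) $ i * fx i (fst z) (snd z) s) (z + \<sigma> *\<^sub>R (axis i 1, 0))) (at \<sigma>)"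
proof -
  obtain x v where z: "z = (x, v)" by (cases z)
  show ?thesis unfolding z W_def
    by (simp, auto intro!: derivative_eq_intros d_P d_x)
qed

lemma dG2: "((\<lambda>\<sigma>. W (z + \<sigma> *\<^sub>R (0, axis i 1)) * dP i (fst (z + \<sigma> *\<^sub>R (0, axis i 1))) * f (fst (z + \<sigma> *\<^sub>R (0, axis i 1))) (snd (z + \<sigma> *\<^sub>R (0, axis i 1))) s)
   has_real_derivative
   (\<lambda>z. (snd z) $ i * dP i (fst z) * f (fst z) (snd z) s + W z * dP i (fst z) * fv i (fst z) (snd z) s) (z + \<sigma> *\<^sub>R (0, axis i 1))) (at \<sigma>)"
proof -
  obtain x v where z: "z = (x, v)" by (cases z)
  show ?thesis unfolding z W_def
    by (simp add: norm_axis_sq, auto intro!: derivative_eq_intros d_v simp: algebra_simps)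
qed

definition "D1 s i z = dP i (fst z) * (snd z) $ i * f (fst z) (snd z) s + W z * (snd z) $ i * fx i (fst z) (snd z) s"
definition "D2 s i z = (snd z) $ i * dP i (fst z) * f (fst z) (snd z) s + W z * dP i (fst z) * fv i (fst z) (snd z) s"
definition "T1 s z = W z * (- (\<Sum>i\<in>UNIV. (snd z) $ i * fx i (fst z) (snd z) s) + (\<Sum>i\<in>UNIV. dP i (fst z) * fv i (fst z) (snd z) s))"

lemma cdP': "continuous_on UNIV (\<lambda>z. dP i (fst z))"
  by (rule cont_comp_UNIV[OF cdP]) (intro continuous_intros)

lemma ibp_D1:
  assumes B: "\<And>x v. norm x > B \<or> norm v > B \<Longrightarrow> f x v s = 0"
  shows "integrable lborel (D1 s i)" "(\<integral>z. D1 s i z \<partial>lborel) = 0"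
proof -
  note I = ibp[where G="\<lambda>z. W z * (snd z) $ i * f (fst z) (snd z) s" and D="D1 s i" and w="(axis i 1, 0)" and RK="2*B"]
  have h: "continuous_on UNIV (\<lambda>z. W z * (snd z) $ i * f (fst z) (snd z) s)"
    "continuous_on UNIV (D1 s i)"
    "\<And>z \<sigma>. ((\<lambda>\<sigma>. W (z + \<sigma> *\<^sub>R (axis i 1, 0)) * (snd (z + \<sigma> *\<^sub>R (axis i 1, 0))) $ i * f (fst (z + \<sigma> *\<^sub>R (axis i 1, 0))) (snd (z + \<sigma> *\<^sub>R (axis i 1, 0))) s)
      has_real_derivative D1 s i (z + \<sigma> *\<^sub>R (axis i 1, 0))) (at \<sigma>)"
    "\<And>z. 2 * B < norm z \<Longrightarrow> W z * (snd z) $ i * f (fst z) (snd z) s = 0"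
  proof -
    show "continuous_on UNIV (\<lambda>z. W z * (snd z) $ i * f (fst z) (snd z) s)"
      by (intro continuous_intros cW cont_f)
    show "continuous_on UNIV (D1 s i)" unfolding D1_def[abs_def]
      by (intro continuous_intros cW cont_f cont_fx cdP')
    show "\<And>z \<sigma>. ((\<lambda>\<sigma>. W (z + \<sigma> *\<^sub>R (axis i 1, 0)) * (snd (z + \<sigma> *\<^sub>R (axis i 1, 0))) $ i * f (fst (z + \<sigma> *\<^sub>R (axis i 1, 0))) (snd (z + \<sigma> *\<^sub>R (axis i 1, 0))) s)
      has_real_derivative D1 s i (z + \<sigma> *\<^sub>R (axis i 1, 0))) (at \<sigma>)"
      unfolding D1_def by (rule dG1)
    show "W z * (snd z) $ i * f (fst z) (snd z) s = 0" if "2 * B < norm z" for z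
      using B[OF norm_z_big[OF that]] by simp
  qed
  show "integrable lborel (D1 s i)" "(\<integral>z. D1 s i z \<partial>lborel) = 0" using I[OF h] by auto
qed

lemma ibp_D2:
  assumes B: "\<And>x v. norm x > B \<or> norm v > B \<Longrightarrow> f x v s = 0"
  shows "integrable lborel (D2 s i)" "(\<integral>z. D2 s i z \<partial>lborel) = 0"
proof -
  note I = ibp[where G="\<lambda>z. W z * dP i (fst z) * f (fst z) (snd z) s" and D="D2 s i" and w="(0, axis i 1)" and RK="2*B"]
  have h: "continuous_on UNIV (\<lambda>z. W z * dP i (fst z) * f (fst z) (snd z) s)"
    "continuous_on UNIV (D2 s i)"
    "\<And>z \<sigma>. ((\<lambda>\<sigma>. W (z + \<sigma> *\<^sub>R (0, axis i 1)) * dP i (fst (z + \<sigma> *\<^sub>R (0, axis i 1))) * f (fst (z + \<sigma> *\<^sub>R (0, axis i 1))) (snd (z + \<sigma> *\<^sub>R (0, axis i 1))) s)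
      has_real_derivative D2 s i (z + \<sigma> *\<^sub>R (0, axis i 1))) (at \<sigma>)"
    "\<And>z. 2 * B < norm z \<Longrightarrow> W z * dP i (fst z) * f (fst z) (snd z) s = 0"
  proof -
    show "continuous_on UNIV (\<lambda>z. W z * dP i (fst z) * f (fst z) (snd z) s)"
      by (intro continuous_intros cW cont_f cdP')
    show "continuous_on UNIV (D2 s i)" unfolding D2_def[abs_def]
      by (intro continuous_intros cW cont_f cont_fv cdP')
    show "\<And>z \<sigma>. ((\<lambda>\<sigma>. W (z + \<sigma> *\<^sub>R (0, axis i 1)) * dP i (fst (z + \<sigma> *\<^sub>R (0, axis i 1))) * f (fst (z + \<sigma> *\<^sub>R (0, axis i 1))) (snd (z + \<sigma> *\<^sub>R (0, axis i 1))) s)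
      has_real_derivative D2 s i (z + \<sigma> *\<^sub>R (0, axis i 1))) (at \<sigma>)"
      unfolding D2_def by (rule dG2)
    show "W z * dP i (fst z) * f (fst z) (snd z) s = 0" if "2 * B < norm z" for z
      using B[OF norm_z_big[OF that]] by simp
  qed
  show "integrable lborel (D2 s i)" "(\<integral>z. D2 s i z \<partial>lborel) = 0" using I[OF h] by auto
qed

lemma T1_eq: "T1 s z = (\<Sum>i\<in>UNIV. D2 s i z - D1 s i z)"
  unfolding T1_def D1_def D2_def
  by (simp add: sum_subtractf sum_distrib_left algebra_simps)

lemma ibp_T1:
  assumes B: "\<And>x v. norm x > B \<or> norm v > B \<Longrightarrow> f x v s = 0"
  shows "integrable lborel (T1 s)" "(\<integral>z. T1 s z \<partial>lborel) = 0"
proof -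
  have I: "integrable lborel (\<lambda>z. D2 s i z - D1 s i z)" for i
    using ibp_D1[OF B] ibp_D2[OF B] by auto
  show "integrable lborel (T1 s)" unfolding T1_eq[abs_def] by (rule Bochner_Integration.integrable_sum) (rule I)
  have "(\<integral>z. T1 s z \<partial>lborel) = (\<Sum>i\<in>UNIV. \<integral>z. D2 s i z - D1 s i z \<partial>lborel)"
    unfolding T1_eq by (rule Bochner_Integration.integral_sum) (rule I)
  also have "\<dots> = 0" using ibp_D1[OF B] ibp_D2[OF B] by simp
  finally show "(\<integral>z. T1 s z \<partial>lborel) = 0" .
qed

end

context setting begin

definition "T2 s z = W z * (- (\<Sum>i\<in>UNIV. fv i (fst z) (snd z) s * (u_tilde \<phi> f (fst z) s $ i - (snd z) $ i) - f (fst z) (snd z) s))"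
definition "D3 s i c x v = v $ i * (c $ i - v $ i) * f x v s - W (x, v) * f x v s + W (x, v) * (c $ i - v $ i) * fv i x v s"

lemma W_app: "W (x, v) = norm v ^ 2 / 2 + \<Phi> x" by (simp add: W_def)

lemma dG3: "((\<lambda>\<sigma>. W (x, v + \<sigma> *\<^sub>R axis i 1) * (c $ i - (v + \<sigma> *\<^sub>R axis i 1) $ i) * f x (v + \<sigma> *\<^sub>R axis i 1) s)
   has_real_derivative D3 s i c x (v + \<sigma> *\<^sub>R axis i 1)) (at \<sigma>)"
  unfolding D3_def W_app
  by (simp add: norm_axis_sq, auto intro!: derivative_eq_intros d_v simp: field_simps power2_eq_square)

lemma cont_slice: "continuous_on UNIV g \<Longrightarrow> continuous_on UNIV (\<lambda>v. g (x, v))"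
  by (rule cont_comp_UNIV) (auto intro!: continuous_intros)

lemma ibp_D3:
  assumes B: "\<And>x v. norm x > B \<or> norm v > B \<Longrightarrow> f x v s = 0"
  shows "integrable lborel (D3 s i c x)" "(\<integral>v. D3 s i c x v \<partial>lborel) = 0"
proof -
  note I = ibp[where G="\<lambda>v. W (x, v) * (c $ i - v $ i) * f x v s" and D="D3 s i c x" and w="axis i 1" and RK="B"]
  have cf: "continuous_on UNIV (\<lambda>v. f x v s)" using cont_slice[OF cont_f, where x=x] by simp
  have cfv: "continuous_on UNIV (\<lambda>v. fv i x v s)" using cont_slice[OF cont_fv, where x=x] by simp
  have cWx: "continuous_on UNIV (\<lambda>v. W (x, v))" by (rule cont_slice[OF cW])
  have h: "continuous_on UNIV (\<lambda>v. W (x, v) * (c $ i - v $ i) * f x v s)"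
    "continuous_on UNIV (D3 s i c x)"
    "\<And>v \<sigma>. ((\<lambda>\<sigma>. W (x, v + \<sigma> *\<^sub>R axis i 1) * (c $ i - (v + \<sigma> *\<^sub>R axis i 1) $ i) * f x (v + \<sigma> *\<^sub>R axis i 1) s)
      has_real_derivative D3 s i c x (v + \<sigma> *\<^sub>R axis i 1)) (at \<sigma>)"
    "\<And>v. B < norm v \<Longrightarrow> W (x, v) * (c $ i - v $ i) * f x v s = 0"
  proof -
    show "continuous_on UNIV (\<lambda>v. W (x, v) * (c $ i - v $ i) * f x v s)"
      by (intro continuous_intros cWx cf)
    show "continuous_on UNIV (D3 s i c x)" unfolding D3_def[abs_def]
      by (intro continuous_intros cWx cf cfv)
    show "\<And>v \<sigma>. ((\<lambda>\<sigma>. W (x, v + \<sigma> *\<^sub>R axis i 1) * (c $ i - (v + \<sigma> *\<^sub>R axis i 1) $ i) * f x (v + \<sigma> *\<^sub>R axis i 1) s)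
      has_real_derivative D3 s i c x (v + \<sigma> *\<^sub>R axis i 1)) (at \<sigma>)" by (rule dG3)
    show "W (x, v) * (c $ i - v $ i) * f x v s = 0" if "B < norm v" for v
      using B[of x v] that by simp
  qed
  show "integrable lborel (D3 s i c x)" "(\<integral>v. D3 s i c x v \<partial>lborel) = 0" using I[OF h] by auto
qed

lemma T2_eq: "T2 s (x, v) = (\<Sum>i\<in>UNIV. v $ i * (u_tilde \<phi> f x s $ i - v $ i) * f x v s - D3 s i (u_tilde \<phi> f x s) x v)"
  unfolding T2_def D3_def
  by (simp add: sum_subtractf sum_distrib_left algebra_simps)

lemma sum_inner_sq: "(\<Sum>i\<in>UNIV. v $ i * (c $ i - v $ i)) = v \<bullet> c - norm v ^ 2" for v c :: "real^'d"
  by (simp add: power2_norm_eq_inner inner_vec_def sum_subtractf algebra_simps)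

lemma fiber:
  assumes B: "\<And>x v. norm x > B \<or> norm v > B \<Longrightarrow> f x v s = 0"
  shows "(\<integral>v. T2 s (x, v) \<partial>lborel) = (\<integral>v. (v \<bullet> u_tilde \<phi> f x s - norm v ^ 2) * f x v s \<partial>lborel)"
proof -
  let ?c = "u_tilde \<phi> f x s"
  have cf: "continuous_on UNIV (\<lambda>v. f x v s)" using cont_slice[OF cont_f, where x=x] by simp
  have Ia: "integrable lborel (\<lambda>v. v $ i * (?c $ i - v $ i) * f x v s)" for i
    by (rule int_cc[where R=B]) (intro continuous_intros cf, use B in simp)
  have I: "integrable lborel (\<lambda>v. v $ i * (?c $ i - v $ i) * f x v s - D3 s i ?c x v)" for i
    using Ia ibp_D3[OF B] by auto
  have "(\<integral>v. T2 s (x, v) \<partial>lborel) = (\<Sum>i\<in>UNIV. \<integral>v. v $ i * (?c $ i - v $ i) * f x v s - D3 s i ?c x v \<partial>lborel)"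
    unfolding T2_eq by (rule Bochner_Integration.integral_sum) (rule I)
  also have "\<dots> = (\<Sum>i\<in>UNIV. \<integral>v. v $ i * (?c $ i - v $ i) * f x v s \<partial>lborel)"
    using Ia ibp_D3[OF B] by simp
  also have "\<dots> = (\<integral>v. (\<Sum>i\<in>UNIV. v $ i * (?c $ i - v $ i) * f x v s) \<partial>lborel)"
    by (rule Bochner_Integration.integral_sum[symmetric]) (rule Ia)
  also have "\<dots> = (\<integral>v. (v \<bullet> ?c - norm v ^ 2) * f x v s \<partial>lborel)"
    by (simp add: sum_distrib_right[symmetric] sum_inner_sq)
  finally show ?thesis .
qed

lemma W_ft_split: "0 \<le> s \<Longrightarrow> W z * ft (fst z) (snd z) s = T1 s z + T2 s z"
proof -
  assume "0 \<le> s"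
  note k = kin[OF this, of "fst z" "snd z"]
  show ?thesis unfolding T1_def T2_def by (simp only: k) (simp add: algebra_simps)
qed

definition "J s x = (\<integral>v. (v \<bullet> u_tilde \<phi> f x s - norm v ^ 2) * f x v s \<partial>lborel)"

lemma Eprime:
  assumes "0 < s"
  shows "((\<lambda>s. energy \<Phi> f s) has_real_derivative (\<integral>x. J s x \<partial>lborel)) (at s)"
    "integrable lborel (J s)"
proof -
  obtain B where B: "B > 0" "\<And>x v t. 0 \<le> t \<Longrightarrow> t \<le> s \<Longrightarrow> (norm x > B \<or> norm v > B) \<Longrightarrow> f x v t = 0"
    using suppB[of s] assms by auto
  have Bs: "\<And>x v. norm x > B \<or> norm v > B \<Longrightarrow> f x v s = 0" using B(2) assms by auto
  note E = energy_deriv[OF assms]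
  have IT2: "integrable lborel (T2 s)"
  proof -
    have "integrable lborel (\<lambda>z. W z * ft (fst z) (snd z) s - T1 s z)"
      using E(2) ibp_T1[OF Bs] by auto
    also have "(\<lambda>z. W z * ft (fst z) (snd z) s - T1 s z) = T2 s"
      using W_ft_split assms by (auto simp: fun_eq_iff)
    finally show ?thesis .
  qed
  have "(\<integral>z. W z * ft (fst z) (snd z) s \<partial>lborel) = (\<integral>z. T1 s z + T2 s z \<partial>lborel)"
    using W_ft_split assms by simp
  also have "\<dots> = (\<integral>z. T2 s z \<partial>lborel)" using ibp_T1[OF Bs] IT2 by simp
  also have "\<dots> = (\<integral>x. \<integral>v. T2 s (x, v) \<partial>lborel \<partial>lborel)"
    using lborel_pair.integral_fst'[of "T2 s"] IT2 by (simp add: lborel_prod)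
  also have "\<dots> = (\<integral>x. J s x \<partial>lborel)" unfolding J_def using fiber[OF Bs] by simp
  finally show "((\<lambda>s. energy \<Phi> f s) has_real_derivative (\<integral>x. J s x \<partial>lborel)) (at s)"
    using E(1) by simp
  have "integrable lborel (\<lambda>x. \<integral>v. T2 s (x, v) \<partial>lborel)"
    using lborel_pair.integrable_fst'[of "T2 s"] IT2 by (simp add: lborel_prod)
  then show "integrable lborel (J s)" unfolding J_def[abs_def] using fiber[OF Bs] by simp
qed

end

context setting begin

lemma cc2_fp:
  assumes Bs: "\<And>x v. norm x > B \<or> norm v > B \<Longrightarrow> f x v s = 0" and p: "continuous_on UNIV p"
  shows "cc2 B (\<lambda>z. f (fst z) (snd z) s *\<^sub>R p (snd z))"
  unfolding cc2_def
proof (intro conjI allI impI)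
  show "continuous_on UNIV (\<lambda>z. f (fst z) (snd z) s *\<^sub>R p (snd z))"
    by (intro continuous_intros cont_f cont_comp_UNIV[OF p])
  show "f (fst (y, v)) (snd (y, v)) s *\<^sub>R p (snd (y, v)) = 0" if "B < norm y \<or> B < norm v" for y v
    using Bs[OF that] by simp
qed

lemma cont_nth: "continuous_on UNIV (\<lambda>a::real^'d. a $ i)"
  by (rule linear_continuous_on[OF bounded_linear_vec_nth])

lemma norm_sq_vec: "norm (a::real^'d) ^ 2 = (\<Sum>i\<in>UNIV. (a $ i)^2)"
  unfolding power2_norm_eq_inner inner_vec_def by (simp add: power2_eq_square)

lemma cphi: "continuous_on UNIV (\<lambda>y. \<phi> (x - y))"
  by (rule cont_comp_UNIV[OF c\<phi>]) (intro continuous_intros)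

lemma quad_le: "(\<And>l::real. 0 \<le> b - 2 * l * a + l^2 * m) \<Longrightarrow> m > 0 \<Longrightarrow> a^2 \<le> m * b"
proof -
  assume h: "\<And>l::real. 0 \<le> b - 2 * l * a + l^2 * m" and m: "m > 0"
  have "0 \<le> b - 2 * (a/m) * a + (a/m)^2 * m" by (rule h)
  also have "\<dots> = b - a^2 / m" using m by (simp add: field_simps power2_eq_square)
  finally show ?thesis using m by (simp add: field_simps)
qed

definition "ee s y = (\<integral>v. norm v ^ 2 * f y v s \<partial>lborel)"
definition "Et s x = (\<integral>y. \<phi> (x - y) * ee s y \<partial>lborel)"

lemma CS:
  assumes Bs: "\<And>x v. norm x > B \<or> norm v > B \<Longrightarrow> f x v s = 0"
    and pos: "rho_tilde \<phi> f x s > 0"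
  shows "norm (\<integral>y. \<phi> (x - y) *\<^sub>R jflux f y s \<partial>lborel) ^ 2 \<le> rho_tilde \<phi> f x s * Et s x"
proof -
  let ?m = "rho_tilde \<phi> f x s"
  let ?a = "\<integral>y. \<phi> (x - y) *\<^sub>R jflux f y s \<partial>lborel"
  define k0 where "k0 = (\<lambda>z::(real^'d)\<times>(real^'d). f (fst z) (snd z) s *\<^sub>R (1::real))"
  define k1 where "k1 = (\<lambda>i z::(real^'d)\<times>(real^'d). f (fst z) (snd z) s *\<^sub>R (snd z $ i))"
  define k2 where "k2 = (\<lambda>i z::(real^'d)\<times>(real^'d). f (fst z) (snd z) s *\<^sub>R (snd z $ i)^2)"
  define kv where "kv = (\<lambda>z::(real^'d)\<times>(real^'d). f (fst z) (snd z) s *\<^sub>R snd z)"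
  have c0: "cc2 B k0" unfolding k0_def by (rule cc2_fp) (auto intro: Bs continuous_intros cont_nth)
  have c1: "cc2 B (k1 i)" for i unfolding k1_def by (rule cc2_fp) (auto intro: Bs continuous_intros cont_nth)
  have c2: "cc2 B (k2 i)" for i unfolding k2_def by (rule cc2_fp) (auto intro: Bs continuous_intros cont_nth)
  have cv: "cc2 B kv" unfolding kv_def by (rule cc2_fp) (auto intro: Bs continuous_intros cont_nth)
  have jf: "jflux f y s = (\<integral>v. kv (y, v) \<partial>lborel)" for y unfolding jflux_def kv_def by simp
  have rh: "rho f y s = (\<integral>v. k0 (y, v) \<partial>lborel)" for y unfolding rho_def k0_def by simp
  have m_eq: "?m = (\<integral>y. \<phi> (x - y) *\<^sub>R (\<integral>v. k0 (y, v) \<partial>lborel) \<partial>lborel)"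
    unfolding rho_tilde_def rh by simp
  have jfi: "jflux f y s $ i = (\<integral>v. k1 i (y, v) \<partial>lborel)" for y i
  proof -
    have "jflux f y s $ i = (\<integral>v. kv (y, v) $ i \<partial>lborel)"
      unfolding jf by (rule integral_bounded_linear[OF bounded_linear_vec_nth cc2_int_v[OF cv], symmetric])
    then show ?thesis by (simp add: kv_def k1_def)
  qed
  have ai: "?a $ i = (\<integral>y. \<phi> (x - y) *\<^sub>R (\<integral>v. k1 i (y, v) \<partial>lborel) \<partial>lborel)" for i
  proof -
    have "?a $ i = (\<integral>y. (\<phi> (x - y) *\<^sub>R jflux f y s) $ i \<partial>lborel)"
      unfolding jf by (rule integral_bounded_linear[OF bounded_linear_vec_nth cc2_conv_int[OF cv cphi], symmetric])
    then show ?thesis by (simp add: jfi)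
  qed
  define b where "b = (\<lambda>i. \<integral>y. \<phi> (x - y) *\<^sub>R (\<integral>v. k2 i (y, v) \<partial>lborel) \<partial>lborel)"
  have quad: "0 \<le> b i - 2 * l * (?a $ i) + l^2 * ?m" for i l
  proof -
    define k where "k = (\<lambda>z::(real^'d)\<times>(real^'d). f (fst z) (snd z) s *\<^sub>R (snd z $ i - l)^2)"
    have ck: "cc2 B k" unfolding k_def by (rule cc2_fp) (auto intro: Bs intro!: continuous_intros cont_nth)
    have inner: "(\<integral>v. k (y, v) \<partial>lborel) = (\<integral>v. k2 i (y, v) \<partial>lborel) - 2 * l * (\<integral>v. k1 i (y, v) \<partial>lborel) + l^2 * (\<integral>v. k0 (y, v) \<partial>lborel)" for y
    proof -
      have "(\<lambda>v. k (y, v)) = (\<lambda>v. k2 i (y, v) - 2 * l * k1 i (y, v) + l^2 * k0 (y, v))"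
        by (auto simp: k_def k0_def k1_def k2_def power2_eq_square algebra_simps fun_eq_iff)
      then show ?thesis using cc2_int_v[OF c0] cc2_int_v[OF c1] cc2_int_v[OF c2] by simp
    qed
    have "0 \<le> (\<integral>y. \<phi> (x - y) *\<^sub>R (\<integral>v. k (y, v) \<partial>lborel) \<partial>lborel)"
    proof (intro integral_nonneg_AE AE_I2)
      fix y
      have "0 \<le> (\<integral>v. k (y, v) \<partial>lborel)"
        by (intro integral_nonneg_AE AE_I2) (auto simp: k_def fnn)
      then show "0 \<le> \<phi> (x - y) *\<^sub>R (\<integral>v. k (y, v) \<partial>lborel)" using \<phi>nn by simp
    qed
    also have "\<dots> = b i - 2 * l * (?a $ i) + l^2 * ?m"
    proof -
      define P0 where "P0 = (\<lambda>y. \<phi> (x - y) * (\<integral>v. k0 (y, v) \<partial>lborel))"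
      define P1 where "P1 = (\<lambda>y. \<phi> (x - y) * (\<integral>v. k1 i (y, v) \<partial>lborel))"
      define P2 where "P2 = (\<lambda>y. \<phi> (x - y) * (\<integral>v. k2 i (y, v) \<partial>lborel))"
      have i0: "integrable lborel P0" unfolding P0_def using cc2_conv_int[OF c0 cphi] by simp
      have i1: "integrable lborel P1" unfolding P1_def using cc2_conv_int[OF c1 cphi] by simp
      have i2: "integrable lborel P2" unfolding P2_def using cc2_conv_int[OF c2 cphi] by simp
      have "(\<integral>y. \<phi> (x - y) *\<^sub>R (\<integral>v. k (y, v) \<partial>lborel) \<partial>lborel) = (\<integral>y. (P2 y - (2 * l) * P1 y) + l^2 * P0 y \<partial>lborel)"
        unfolding inner P0_def P1_def P2_def by (simp add: algebra_simps)
      also have "\<dots> = (\<integral>y. P2 y \<partial>lborel) - (2 * l) * (\<integral>y. P1 y \<partial>lborel) + l^2 * (\<integral>y. P0 y \<partial>lborel)"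
        using i0 i1 i2 by (simp add: integral_add integral_diff)
      also have "\<dots> = b i - 2 * l * (?a $ i) + l^2 * ?m"
        unfolding ai b_def m_eq P0_def P1_def P2_def by simp
      finally show ?thesis .
    qed
    finally show ?thesis .
  qed
  have "norm ?a ^ 2 = (\<Sum>i\<in>UNIV. (?a $ i)^2)" by (rule norm_sq_vec)
  also have "\<dots> \<le> (\<Sum>i\<in>UNIV. ?m * b i)"
    by (intro sum_mono quad_le[OF quad pos])
  also have "\<dots> = ?m * (\<Sum>i\<in>UNIV. b i)" by (simp add: sum_distrib_left)
  also have "(\<Sum>i\<in>UNIV. b i) = Et s x"
  proof -
    have "(\<Sum>i\<in>UNIV. b i) = (\<integral>y. (\<Sum>i\<in>UNIV. \<phi> (x - y) *\<^sub>R (\<integral>v. k2 i (y, v) \<partial>lborel)) \<partial>lborel)"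
      unfolding b_def by (rule Bochner_Integration.integral_sum[symmetric]) (rule cc2_conv_int[OF c2 cphi])
    also have "\<dots> = (\<integral>y. \<phi> (x - y) * ee s y \<partial>lborel)"
    proof (rule Bochner_Integration.integral_cong[OF refl])
      fix y
      have "(\<Sum>i\<in>UNIV. (\<integral>v. k2 i (y, v) \<partial>lborel)) = (\<integral>v. (\<Sum>i\<in>UNIV. k2 i (y, v)) \<partial>lborel)"
        by (rule Bochner_Integration.integral_sum[symmetric]) (rule cc2_int_v[OF c2])
      also have "\<dots> = ee s y"
        unfolding ee_def k2_def norm_sq_vec by (simp add: sum_distrib_left mult.commute)
      finally show "(\<Sum>i\<in>UNIV. \<phi> (x - y) *\<^sub>R (\<integral>v. k2 i (y, v) \<partial>lborel)) = \<phi> (x - y) * ee s y"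
        by (simp add: sum_distrib_left[symmetric])
    qed
    finally show ?thesis unfolding Et_def .
  qed
  finally show ?thesis .
qed

end

lemma vol_ball: "emeasure lborel (ball (c::'a::euclidean_space) \<rho>) = ennreal (measure lborel (ball c \<rho>))"
  using emeasure_lborel_ball_finite[of c \<rho>] by (subst emeasure_eq_ennreal_measure) auto
lemma vol_ball2: "\<rho> \<ge> 0 \<Longrightarrow> measure lborel (ball (c::'a::euclidean_space) \<rho>) = \<rho> ^ DIM('a) * measure lborel (ball (0::'a) 1)"
  by (rule content_ball_conv_unit_ball)
lemma vol_pos: "measure lborel (ball (0::'a::euclidean_space) 1) > 0"
  by (rule content_ball_pos) simp

lemma meas_ind_ball: "(\<lambda>p. indicator (ball (fst p) \<beta>) (snd p) :: ennreal) \<in> borel_measurable (lborel \<Otimes>\<^sub>M (lborel :: ('a::euclidean_space) measure))"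
proof -
  have "{p::'a\<times>'a. dist (fst p) (snd p) < \<beta>} \<in> sets borel"
    by (intro borel_open open_Collect_less) (intro continuous_intros)+
  then have "(indicator {p::'a\<times>'a. dist (fst p) (snd p) < \<beta>} :: _ \<Rightarrow> ennreal) \<in> borel_measurable borel"
    by (rule borel_measurable_indicator)
  moreover have "(\<lambda>p. indicator (ball (fst p) \<beta>) (snd p) :: ennreal) = indicator {p::'a\<times>'a. dist (fst p) (snd p) < \<beta>}"
    by (auto simp: indicator_def fun_eq_iff)
  ultimately show ?thesis by (simp add: lborel_prod)
qed

lemma inv_sigma:
  fixes \<sigma> :: ennreal assumes m: "m > 0"
  shows "inverse (ennreal m * \<sigma>) * \<sigma> \<le> ennreal (1 / m)"
proof (cases \<sigma>)
  case (real c)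
  show ?thesis
  proof (cases "c = 0")
    case True then show ?thesis using real by simp
  next
    case False
    then have c: "c > 0" using real by simp
    have "inverse (ennreal m * \<sigma>) * \<sigma> = ennreal (inverse (m * c)) * ennreal c"
      using real m c by (simp add: ennreal_mult'[symmetric] inverse_ennreal)
    also have "\<dots> = ennreal (1 / m)" using m c by (simp add: ennreal_mult'[symmetric] field_simps)
    finally show ?thesis by simp
  qed
next
  case top then show ?thesis using m by (simp add: ennreal_mult_top)
qed

context setting begin

definition "mphi = Inf (\<phi> ` ball 0 r)"
definition "Sphi = Sup (\<phi> ` ball 0 R)"

lemma r_lt_R: "r < R"
proof (rule ccontr)
  assume "\<not> r < R"
  obtain i :: 'd where True by simp
  let ?x = "R *\<^sub>R axis i (1::real)"
  have "norm ?x = R" using R by simp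
  then show False using \<phi>pos[of ?x] \<phi>zero[of ?x] \<open>\<not> r < R\<close> by simp
qed

lemma mphi: "mphi > 0" "\<And>z. norm z < r \<Longrightarrow> mphi \<le> \<phi> z"
proof -
  obtain p where p: "p \<in> cball 0 r" "\<And>y. y \<in> cball 0 r \<Longrightarrow> \<phi> p \<le> \<phi> y"
    using continuous_attains_inf[of "cball (0::real^'d) r" \<phi>] r continuous_on_subset[OF c\<phi>] by auto
  have ne: "\<phi> ` ball 0 r \<noteq> {}" using r by auto
  have "\<phi> p \<le> mphi" unfolding mphi_def by (rule cInf_greatest[OF ne]) (use p in auto)
  moreover have "\<phi> p > 0" using p \<phi>pos by auto
  ultimately show "mphi > 0" by simp
  show "mphi \<le> \<phi> z" if "norm z < r" for z
    unfolding mphi_def by (rule cInf_lower) (use that \<phi>nn in \<open>auto intro: bdd_belowI[where m=0]\<close>)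
qed

lemma Sphi: "0 \<le> Sphi" "\<And>z. norm z < R \<Longrightarrow> \<phi> z \<le> Sphi"
proof -
  have "bounded (\<phi> ` cball 0 R)"
    by (intro compact_imp_bounded compact_continuous_image continuous_on_subset[OF c\<phi>]) auto
  then have bdd: "bdd_above (\<phi> ` ball 0 R)"
    by (rule bounded_imp_bdd_above[OF bounded_subset]) auto
  show le: "\<phi> z \<le> Sphi" if "norm z < R" for z
    unfolding Sphi_def by (rule cSup_upper[OF _ bdd]) (use that in auto)
  show "0 \<le> Sphi" using le[of 0] \<phi>nn[of 0] R by simp
qed

lemma phi_le_ind: "ennreal (\<phi> (x - y)) \<le> ennreal Sphi * indicator (ball y R) x"
proof (cases "dist y x < R")
  case True
  then show ?thesis using Sphi(2)[of "x - y"] by (simp add: dist_norm norm_minus_commute ennreal_leI)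
next
  case False
  then show ?thesis using \<phi>zero[of "x - y"] by (simp add: dist_norm norm_minus_commute)
qed

end

context setting begin

lemma sigma_lower:
  fixes \<rho> :: "real^'d \<Rightarrow> real"
  assumes c\<rho>: "continuous_on UNIV \<rho>" and nn: "\<And>y. 0 \<le> \<rho> y" and sp: "\<And>y. norm y > B \<Longrightarrow> \<rho> y = 0"
    and xz: "dist x z < r / 2"
  shows "ennreal mphi * (\<integral>\<^sup>+w. indicator (ball z (r/2)) w * ennreal (\<rho> w) \<partial>lborel) \<le> ennreal (\<integral>w. \<phi> (x - w) * \<rho> w \<partial>lborel)"
proof -
  have int: "integrable lborel (\<lambda>w. \<phi> (x - w) * \<rho> w)"
    by (rule int_cc[where R=B]) (auto intro!: continuous_intros cphi c\<rho> simp: sp)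
  have [measurable]: "\<rho> \<in> borel_measurable lborel" by (simp add: borel_measurable_continuous_onI[OF c\<rho>])
  have [measurable]: "(\<lambda>w. indicator (ball z (r/2)) w :: ennreal) \<in> borel_measurable lborel"
    by (simp add: borel_measurable_indicator borel_open)
  have "ennreal mphi * (\<integral>\<^sup>+w. indicator (ball z (r/2)) w * ennreal (\<rho> w) \<partial>lborel)
      = (\<integral>\<^sup>+w. ennreal mphi * (indicator (ball z (r/2)) w * ennreal (\<rho> w)) \<partial>lborel)"
    by (rule nn_integral_cmult[symmetric]) measurable
  also have "\<dots> \<le> (\<integral>\<^sup>+w. ennreal (\<phi> (x - w) * \<rho> w) \<partial>lborel)"
  proof (rule nn_integral_mono)
    fix w
    show "ennreal mphi * (indicator (ball z (r/2)) w * ennreal (\<rho> w)) \<le> ennreal (\<phi> (x - w) * \<rho> w)"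
    proof (cases "w \<in> ball z (r/2)")
      case True
      then have "dist x w < r" using xz dist_triangle[of x w z] by (simp add: dist_commute)
      then have "mphi \<le> \<phi> (x - w)" using mphi(2)[of "x - w"] by (simp add: dist_norm)
      then have "mphi * \<rho> w \<le> \<phi> (x - w) * \<rho> w" using nn by (intro mult_right_mono) auto
      then show ?thesis using True mphi(1) nn by (simp add: ennreal_mult'[symmetric] ennreal_leI)
    qed simp
  qed
  also have "\<dots> = ennreal (\<integral>w. \<phi> (x - w) * \<rho> w \<partial>lborel)"
    by (rule nn_integral_eq_integral[OF int]) (auto intro!: mult_nonneg_nonneg \<phi>nn nn)
  finally show ?thesis .
qed

lemma q_bound:
  fixes \<rho> :: "real^'d \<Rightarrow> real"
  assumes c\<rho>: "continuous_on UNIV \<rho>" and nn: "\<And>y. 0 \<le> \<rho> y" and sp: "\<And>y. norm y > B \<Longrightarrow> \<rho> y = 0"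
    and xz: "dist x z < r / 2"
  defines "\<rho>t \<equiv> (\<lambda>x. \<integral>w. \<phi> (x - w) * \<rho> w \<partial>lborel)"
  defines "\<sigma> \<equiv> (\<lambda>z. \<integral>\<^sup>+w. indicator (ball z (r/2)) w * ennreal (\<rho> w) \<partial>lborel)"
  shows "ennreal (if \<rho>t x > 0 then \<rho> x / \<rho>t x else 0) \<le> ennreal (\<rho> x) * inverse (ennreal mphi * \<sigma> z)"
proof (cases "\<rho>t x > 0 \<and> \<rho> x > 0")
  case False
  then have "(if \<rho>t x > 0 then \<rho> x / \<rho>t x else 0) = 0" using nn[of x] by auto
  then show ?thesis by simp
next
  case True
  have low: "ennreal mphi * \<sigma> z \<le> ennreal (\<rho>t x)"
    unfolding \<sigma>_def \<rho>t_def by (rule sigma_lower[OF c\<rho> nn sp xz])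
  then have "\<sigma> z \<noteq> top" using mphi(1) by (auto simp: ennreal_mult_top top_unique)
  then obtain c where c: "\<sigma> z = ennreal c" "c \<ge> 0" by (cases "\<sigma> z") auto
  show ?thesis
  proof (cases "c = 0")
    case True
    then show ?thesis using c \<open>\<rho>t x > 0 \<and> \<rho> x > 0\<close> by (simp add: ennreal_mult_top)
  next
    case False
    then have cp: "c > 0" using c by simp
    have "mphi * c \<le> \<rho>t x" using low c mphi(1) True by (simp add: ennreal_mult'[symmetric])
    then have "\<rho> x / \<rho>t x \<le> \<rho> x / (mphi * c)"
      using True cp mphi(1) by (intro divide_left_mono) auto
    moreover have "ennreal (\<rho> x) * inverse (ennreal mphi * \<sigma> z) = ennreal (\<rho> x / (mphi * c))"
      using c cp mphi(1) True
      by (simp add: ennreal_mult'[symmetric] inverse_ennreal divide_inverse)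
    ultimately show ?thesis using True by (simp add: ennreal_leI)
  qed
qed

lemma avg:
  fixes \<rho> :: "real^'d \<Rightarrow> real"
  assumes c\<rho>: "continuous_on UNIV \<rho>" and nn: "\<And>y. 0 \<le> \<rho> y" and sp: "\<And>y. norm y > B \<Longrightarrow> \<rho> y = 0"
  defines "\<rho>t \<equiv> (\<lambda>x. \<integral>w. \<phi> (x - w) * \<rho> w \<partial>lborel)"
  defines "q \<equiv> (\<lambda>x. if \<rho>t x > 0 then \<rho> x / \<rho>t x else 0)"
  shows "(\<integral>\<^sup>+x. indicator (ball y R) x * ennreal (q x) \<partial>lborel) \<le> ennreal (((2*R + r)/r) ^ CARD('d) / mphi)"
proof -
  define \<beta> where "\<beta> = r / 2"
  have \<beta>: "\<beta> > 0" using r by (simp add: \<beta>_def)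
  define \<sigma> where "\<sigma> = (\<lambda>z. \<integral>\<^sup>+w. indicator (ball z \<beta>) w * ennreal (\<rho> w) \<partial>lborel)"
  define u where "u = measure lborel (ball (0::real^'d) 1)"
  have u: "u > 0" unfolding u_def by (rule vol_pos)
  have vol: "emeasure lborel (ball (c::real^'d) \<gamma>) = ennreal (\<gamma> ^ CARD('d) * u)" if "\<gamma> \<ge> 0" for c \<gamma>
    using vol_ball2[OF that, of c] by (simp add: vol_ball u_def)
  have m\<rho>[measurable]: "\<rho> \<in> borel_measurable lborel" by (simp add: borel_measurable_continuous_onI[OF c\<rho>])
  have c\<rho>t: "continuous_on UNIV \<rho>t"
  proof -
    have "continuous_on UNIV (\<lambda>x. \<integral>w. (\<lambda>p. \<phi> (fst p - snd p) * \<rho> (snd p)) (x, w) \<partial>lborel)"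
    proof (rule param_cont[where B=B])
      show "continuous_on (UNIV \<times> UNIV) (\<lambda>p::(real^'d)\<times>(real^'d). \<phi> (fst p - snd p) * \<rho> (snd p))"
        by (simp, intro continuous_intros cont_comp_UNIV[OF c\<phi>] cont_comp_UNIV[OF c\<rho>])
    qed (auto simp: sp)
    then show ?thesis unfolding \<rho>t_def by simp
  qed
  have m\<rho>t[measurable]: "\<rho>t \<in> borel_measurable lborel" by (simp add: borel_measurable_continuous_onI[OF c\<rho>t])
  have mq[measurable]: "q \<in> borel_measurable lborel" unfolding q_def by measurable
  have msp[measurable]: "(\<lambda>p. indicator (ball (fst p) \<beta>) (snd p) :: ennreal) \<in> borel_measurable (lborel \<Otimes>\<^sub>M (lborel :: (real^'d) measure))"
    by (rule meas_ind_ball)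
  have m\<sigma>[measurable]: "\<sigma> \<in> borel_measurable lborel"
    unfolding \<sigma>_def by (rule lborel.borel_measurable_nn_integral) (simp add: case_prod_beta, measurable)
  have mball[measurable]: "(\<lambda>x. indicator (ball c \<gamma>) x :: ennreal) \<in> borel_measurable lborel" for c :: "real^'d" and \<gamma>
    by (simp add: borel_measurable_indicator borel_open)
  define X where "X = (\<integral>\<^sup>+x. indicator (ball y R) x * ennreal (q x) \<partial>lborel)"
  have pt: "ennreal (\<beta> ^ CARD('d) * u) * ennreal (q x) \<le> (\<integral>\<^sup>+z. indicator (ball x \<beta>) z * (ennreal (\<rho> x) * inverse (ennreal mphi * \<sigma> z)) \<partial>lborel)" for x
  proof -
    have "ennreal (\<beta> ^ CARD('d) * u) * ennreal (q x) = (\<integral>\<^sup>+z. ennreal (q x) * indicator (ball x \<beta>) z \<partial>lborel)"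
      using vol[of \<beta> x] \<beta> by (simp add: nn_integral_cmult_indicator mult.commute)
    also have "\<dots> \<le> (\<integral>\<^sup>+z. indicator (ball x \<beta>) z * (ennreal (\<rho> x) * inverse (ennreal mphi * \<sigma> z)) \<partial>lborel)"
    proof (rule nn_integral_mono)
      fix z show "ennreal (q x) * indicator (ball x \<beta>) z \<le> indicator (ball x \<beta>) z * (ennreal (\<rho> x) * inverse (ennreal mphi * \<sigma> z))"
      proof (cases "z \<in> ball x \<beta>")
        case True
        then have "dist x z < r / 2" by (simp add: \<beta>_def)
        have qb: "ennreal (q x) \<le> ennreal (\<rho> x) * inverse (ennreal mphi * \<sigma> z)"
          unfolding q_def \<rho>t_def \<sigma>_def \<beta>_def by (rule q_bound[where B=B, OF c\<rho> nn sp \<open>dist x z < r / 2\<close>])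
        then show ?thesis using True by simp
      qed simp
    qed
    finally show ?thesis .
  qed
  have "ennreal (\<beta> ^ CARD('d) * u) * X = (\<integral>\<^sup>+x. indicator (ball y R) x * (ennreal (\<beta> ^ CARD('d) * u) * ennreal (q x)) \<partial>lborel)"
    unfolding X_def by (subst nn_integral_cmult[symmetric]) (measurable, simp add: algebra_simps)
  also have "\<dots> \<le> (\<integral>\<^sup>+x. \<integral>\<^sup>+z. indicator (ball y R) x * (indicator (ball x \<beta>) z * (ennreal (\<rho> x) * inverse (ennreal mphi * \<sigma> z))) \<partial>lborel \<partial>lborel)"
  proof (rule nn_integral_mono)
    fix x
    have "indicator (ball y R) x * (ennreal (\<beta> ^ CARD('d) * u) * ennreal (q x)) \<le>
        indicator (ball y R) x * (\<integral>\<^sup>+z. indicator (ball x \<beta>) z * (ennreal (\<rho> x) * inverse (ennreal mphi * \<sigma> z)) \<partial>lborel)"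
      by (intro mult_left_mono pt) simp
    also have "\<dots> = (\<integral>\<^sup>+z. indicator (ball y R) x * (indicator (ball x \<beta>) z * (ennreal (\<rho> x) * inverse (ennreal mphi * \<sigma> z))) \<partial>lborel)"
      by (rule nn_integral_cmult[symmetric]) measurable
    finally show "indicator (ball y R) x * (ennreal (\<beta> ^ CARD('d) * u) * ennreal (q x)) \<le> \<dots>" .
  qed
  also have "\<dots> = (\<integral>\<^sup>+z. \<integral>\<^sup>+x. indicator (ball y R) x * (indicator (ball x \<beta>) z * (ennreal (\<rho> x) * inverse (ennreal mphi * \<sigma> z))) \<partial>lborel \<partial>lborel)"
    by (rule lborel_pair.Fubini'[symmetric]) (simp add: case_prod_beta, measurable)
  also have "\<dots> \<le> (\<integral>\<^sup>+z. ennreal (1 / mphi) * indicator (ball y (R + \<beta>)) z \<partial>lborel)"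
  proof (rule nn_integral_mono)
    fix z
    have "(\<integral>\<^sup>+x. indicator (ball y R) x * (indicator (ball x \<beta>) z * (ennreal (\<rho> x) * inverse (ennreal mphi * \<sigma> z))) \<partial>lborel)
        = (\<integral>\<^sup>+x. (indicator (ball y R) x * indicator (ball z \<beta>) x * ennreal (\<rho> x)) * inverse (ennreal mphi * \<sigma> z) \<partial>lborel)"
      by (intro nn_integral_cong) (auto simp: indicator_def dist_commute)
    also have "\<dots> = (\<integral>\<^sup>+x. indicator (ball y R) x * indicator (ball z \<beta>) x * ennreal (\<rho> x) \<partial>lborel) * inverse (ennreal mphi * \<sigma> z)"
      by (rule nn_integral_multc) measurable
    also have "\<dots> \<le> (indicator (ball y (R + \<beta>)) z * \<sigma> z) * inverse (ennreal mphi * \<sigma> z)"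
    proof (rule mult_right_mono)
      show "(\<integral>\<^sup>+x. indicator (ball y R) x * indicator (ball z \<beta>) x * ennreal (\<rho> x) \<partial>lborel) \<le> indicator (ball y (R + \<beta>)) z * \<sigma> z"
      proof (cases "z \<in> ball y (R + \<beta>)")
        case True
        have "(\<integral>\<^sup>+x. indicator (ball y R) x * indicator (ball z \<beta>) x * ennreal (\<rho> x) \<partial>lborel) \<le> \<sigma> z"
          unfolding \<sigma>_def by (intro nn_integral_mono) (auto simp: indicator_def)
        then show ?thesis using True by simp
      next
        case False
        have "(\<integral>\<^sup>+x. indicator (ball y R) x * indicator (ball z \<beta>) x * ennreal (\<rho> x) \<partial>lborel) = (\<integral>\<^sup>+(x::real^'d). 0 \<partial>lborel)"
        proof (rule nn_integral_cong)
          fix x :: "real^'d"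
          have "\<not> (dist y x < R \<and> dist z x < \<beta>)"
            using False dist_triangle[of y z x] by (auto simp: dist_commute)
          then show "indicator (ball y R) x * indicator (ball z \<beta>) x * ennreal (\<rho> x) = 0"
            by (auto simp: indicator_def)
        qed
        then show ?thesis using False by simp
      qed
    qed simp
    also have "\<dots> = indicator (ball y (R + \<beta>)) z * (inverse (ennreal mphi * \<sigma> z) * \<sigma> z)"
      by (simp add: algebra_simps)
    also have "\<dots> \<le> indicator (ball y (R + \<beta>)) z * ennreal (1 / mphi)"
      by (intro mult_left_mono inv_sigma mphi(1)) simp
    finally show "(\<integral>\<^sup>+x. indicator (ball y R) x * (indicator (ball x \<beta>) z * (ennreal (\<rho> x) * inverse (ennreal mphi * \<sigma> z))) \<partial>lborel)
        \<le> ennreal (1 / mphi) * indicator (ball y (R + \<beta>)) z" by (simp add: mult.commute)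
  qed
  also have "\<dots> = ennreal (1 / mphi) * ennreal ((R + \<beta>) ^ CARD('d) * u)"
    using vol[of "R + \<beta>" y] R \<beta> by (simp add: nn_integral_cmult_indicator)
  also have "\<dots> = ennreal ((R + \<beta>) ^ CARD('d) * u / mphi)"
    using mphi(1) u R \<beta> by (simp add: ennreal_mult'[symmetric])
  finally have main: "ennreal (\<beta> ^ CARD('d) * u) * X \<le> ennreal ((R + \<beta>) ^ CARD('d) * u / mphi)" .
  have pos: "\<beta> ^ CARD('d) * u > 0" using \<beta> u by simp
  have "X = ennreal (1 / (\<beta> ^ CARD('d) * u)) * (ennreal (\<beta> ^ CARD('d) * u) * X)"
  proof -
    have "ennreal (1 / (\<beta> ^ CARD('d) * u)) * ennreal (\<beta> ^ CARD('d) * u) = 1"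
      using pos \<beta> by (subst ennreal_mult'[symmetric]) auto
    then show ?thesis by (metis mult.assoc mult_1)
  qed
  also have "\<dots> \<le> ennreal (1 / (\<beta> ^ CARD('d) * u)) * ennreal ((R + \<beta>) ^ CARD('d) * u / mphi)"
    by (intro mult_left_mono main) simp
  also have "\<dots> = ennreal (((R + \<beta>) / \<beta>) ^ CARD('d) / mphi)"
    using pos mphi(1) u \<beta> R by (simp add: ennreal_mult'[symmetric] power_divide field_simps)
  also have "((R + \<beta>) / \<beta>) = (2 * R + r) / r" using r by (simp add: \<beta>_def field_simps)
  finally show ?thesis unfolding X_def .
qed

lemma covering:
  fixes \<rho> e :: "real^'d \<Rightarrow> real"
  assumes c\<rho>: "continuous_on UNIV \<rho>" and nn: "\<And>y. 0 \<le> \<rho> y" and sp: "\<And>y. norm y > B \<Longrightarrow> \<rho> y = 0"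
  assumes ce: "continuous_on UNIV e" and nne: "\<And>y. 0 \<le> e y" and spe: "\<And>y. norm y > B \<Longrightarrow> e y = 0"
  defines "\<rho>t \<equiv> (\<lambda>x. \<integral>w. \<phi> (x - w) * \<rho> w \<partial>lborel)"
  defines "q \<equiv> (\<lambda>x. if \<rho>t x > 0 then \<rho> x / \<rho>t x else 0)"
  defines "et \<equiv> (\<lambda>x. \<integral>y. \<phi> (x - y) * e y \<partial>lborel)"
  shows "(\<integral>\<^sup>+x. ennreal (q x * et x) \<partial>lborel) \<le> ennreal (Sphi * (((2*R + r)/r) ^ CARD('d) / mphi) * (\<integral>y. e y \<partial>lborel))"
proof -
  define C where "C = ((2*R + r)/r) ^ CARD('d) / mphi"
  have C: "C \<ge> 0" using mphi(1) r R by (simp add: C_def)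
  have c\<rho>t: "continuous_on UNIV \<rho>t"
  proof -
    have "continuous_on UNIV (\<lambda>x. \<integral>w. (\<lambda>p. \<phi> (fst p - snd p) * \<rho> (snd p)) (x, w) \<partial>lborel)"
    proof (rule param_cont[where B=B])
      show "continuous_on (UNIV \<times> UNIV) (\<lambda>p::(real^'d)\<times>(real^'d). \<phi> (fst p - snd p) * \<rho> (snd p))"
        by (simp, intro continuous_intros cont_comp_UNIV[OF c\<phi>] cont_comp_UNIV[OF c\<rho>])
    qed (auto simp: sp)
    then show ?thesis unfolding \<rho>t_def by simp
  qed
  have m\<rho>[measurable]: "\<rho> \<in> borel_measurable lborel" by (simp add: borel_measurable_continuous_onI[OF c\<rho>])
  have m\<rho>t[measurable]: "\<rho>t \<in> borel_measurable lborel" by (simp add: borel_measurable_continuous_onI[OF c\<rho>t])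
  have mq[measurable]: "q \<in> borel_measurable lborel" unfolding q_def by measurable
  have qnn: "q x \<ge> 0" for x using nn by (simp add: q_def)
  have ie: "integrable lborel e" by (rule int_cc[where R=B]) (use ce spe in auto)
  have iphe: "integrable lborel (\<lambda>y. \<phi> (x - y) * e y)" for x
    by (rule int_cc[where R=B]) (auto intro!: continuous_intros cphi ce simp: spe)
  have mg: "(\<lambda>p::(real^'d)\<times>(real^'d). ennreal (\<phi> (fst p - snd p) * e (snd p))) \<in> borel_measurable (lborel \<Otimes>\<^sub>M lborel)"
  proof -
    have "continuous_on UNIV (\<lambda>p::(real^'d)\<times>(real^'d). \<phi> (fst p - snd p) * e (snd p))"
      by (intro continuous_intros cont_comp_UNIV[OF c\<phi>] cont_comp_UNIV[OF ce])
    then have "(\<lambda>p::(real^'d)\<times>(real^'d). \<phi> (fst p - snd p) * e (snd p)) \<in> borel_measurable borel"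
      by (rule borel_measurable_continuous_onI)
    then show ?thesis by (simp add: lborel_prod)
  qed
  have mqf: "(\<lambda>p::(real^'d)\<times>(real^'d). ennreal (q (fst p))) \<in> borel_measurable (lborel \<Otimes>\<^sub>M lborel)"
    by measurable
  have "(\<integral>\<^sup>+x. ennreal (q x * et x) \<partial>lborel) = (\<integral>\<^sup>+x. \<integral>\<^sup>+y. ennreal (\<phi> (x - y) * e y) * ennreal (q x) \<partial>lborel \<partial>lborel)"
  proof (rule nn_integral_cong)
    fix x :: "real^'d"
    have etnn: "et x \<ge> 0" unfolding et_def by (intro integral_nonneg_AE AE_I2 mult_nonneg_nonneg \<phi>nn nne)
    have "ennreal (et x) = (\<integral>\<^sup>+y. ennreal (\<phi> (x - y) * e y) \<partial>lborel)"
      unfolding et_def by (rule nn_integral_eq_integral[OF iphe, symmetric]) (auto intro!: mult_nonneg_nonneg \<phi>nn nne)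
    moreover have "(\<integral>\<^sup>+y. ennreal (\<phi> (x - y) * e y) * ennreal (q x) \<partial>lborel) = (\<integral>\<^sup>+y. ennreal (\<phi> (x - y) * e y) \<partial>lborel) * ennreal (q x)"
    proof (rule nn_integral_multc)
      have [measurable]: "(\<lambda>y. \<phi> (x - y) * e y) \<in> borel_measurable lborel"
        by (simp add: borel_measurable_continuous_onI continuous_intros cphi ce)
      show "(\<lambda>y. ennreal (\<phi> (x - y) * e y)) \<in> borel_measurable lborel" by measurable
    qed
    ultimately show "ennreal (q x * et x) = (\<integral>\<^sup>+y. ennreal (\<phi> (x - y) * e y) * ennreal (q x) \<partial>lborel)"
      using qnn[of x] etnn by (simp add: ennreal_mult' mult.commute)
  qed
  also have "\<dots> = (\<integral>\<^sup>+y. \<integral>\<^sup>+x. ennreal (\<phi> (x - y) * e y) * ennreal (q x) \<partial>lborel \<partial>lborel)"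
    by (rule lborel_pair.Fubini'[symmetric]) (use mg mqf in \<open>simp add: case_prod_beta\<close>)
  also have "\<dots> \<le> (\<integral>\<^sup>+y. ennreal (e y) * ennreal (Sphi * C) \<partial>lborel)"
  proof (rule nn_integral_mono)
    fix y :: "real^'d"
    have "(\<integral>\<^sup>+x. ennreal (\<phi> (x - y) * e y) * ennreal (q x) \<partial>lborel)
        \<le> (\<integral>\<^sup>+x. (ennreal (e y) * ennreal Sphi) * (indicator (ball y R) x * ennreal (q x)) \<partial>lborel)"
    proof (rule nn_integral_mono)
      fix x
      have "ennreal (\<phi> (x - y) * e y) = ennreal (\<phi> (x - y)) * ennreal (e y)"
        using \<phi>nn nne by (simp add: ennreal_mult')
      also have "\<dots> \<le> (ennreal Sphi * indicator (ball y R) x) * ennreal (e y)"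
        by (intro mult_right_mono phi_le_ind) simp
      finally show "ennreal (\<phi> (x - y) * e y) * ennreal (q x) \<le> (ennreal (e y) * ennreal Sphi) * (indicator (ball y R) x * ennreal (q x))"
        by (rule order_trans[OF mult_right_mono]) (simp_all add: algebra_simps)
    qed
    also have "\<dots> = (ennreal (e y) * ennreal Sphi) * (\<integral>\<^sup>+x. indicator (ball y R) x * ennreal (q x) \<partial>lborel)"
    proof (rule nn_integral_cmult)
      show "(\<lambda>x. indicator (ball y R) x * ennreal (q x)) \<in> borel_measurable lborel"
      proof -
        have [measurable]: "(\<lambda>x. indicator (ball y R) x :: ennreal) \<in> borel_measurable lborel"
          by (simp add: borel_measurable_indicator borel_open)
        show ?thesis by measurable
      qed
    qed
    also have "\<dots> \<le> (ennreal (e y) * ennreal Sphi) * ennreal C"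
      unfolding C_def q_def \<rho>t_def by (intro mult_left_mono avg[where B=B, OF c\<rho> nn sp] zero_le)
    also have "\<dots> = ennreal (e y) * ennreal (Sphi * C)" using Sphi(1) C by (simp add: ennreal_mult' mult.assoc)
    finally show "(\<integral>\<^sup>+x. ennreal (\<phi> (x - y) * e y) * ennreal (q x) \<partial>lborel) \<le> ennreal (e y) * ennreal (Sphi * C)" .
  qed
  also have "\<dots> = (\<integral>\<^sup>+y. ennreal (e y) \<partial>lborel) * ennreal (Sphi * C)"
  proof (rule nn_integral_multc)
    have [measurable]: "e \<in> borel_measurable lborel" by (simp add: borel_measurable_continuous_onI[OF ce])
    show "(\<lambda>y. ennreal (e y)) \<in> borel_measurable lborel" by measurable
  qed
  also have "\<dots> = ennreal (\<integral>y. e y \<partial>lborel) * ennreal (Sphi * C)"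
    by (subst nn_integral_eq_integral[OF ie]) (auto simp: nne)
  also have "\<dots> = ennreal (Sphi * C * (\<integral>y. e y \<partial>lborel))"
    using Sphi(1) C by (simp add: ennreal_mult' integral_nonneg_AE nne mult.commute)
  finally show ?thesis unfolding C_def .
qed

end

context setting begin

definition "Ap = Sphi * (((2*R + r)/r) ^ CARD('d) / mphi)"
definition "Pf s x = rho f x s * norm (u_tilde \<phi> f x s) ^ 2"

lemma Ap_nn: "Ap \<ge> 0" using Sphi(1) mphi(1) r R by (simp add: Ap_def)

lemma P_bound:
  assumes Bs: "\<And>x v. norm x > B \<or> norm v > B \<Longrightarrow> f x v s = 0"
  shows "integrable lborel (Pf s)" "(\<integral>x. Pf s x \<partial>lborel) \<le> Ap * (\<integral>y. ee s y \<partial>lborel)"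
proof -
  define k0 where "k0 = (\<lambda>z::(real^'d)\<times>(real^'d). f (fst z) (snd z) s *\<^sub>R (1::real))"
  define k2 where "k2 = (\<lambda>z::(real^'d)\<times>(real^'d). f (fst z) (snd z) s *\<^sub>R norm (snd z) ^ 2)"
  define kv where "kv = (\<lambda>z::(real^'d)\<times>(real^'d). f (fst z) (snd z) s *\<^sub>R snd z)"
  have c0: "cc2 B k0" unfolding k0_def by (rule cc2_fp) (auto intro: Bs intro!: continuous_intros)
  have c2: "cc2 B k2" unfolding k2_def by (rule cc2_fp) (auto intro: Bs intro!: continuous_intros)
  have cv: "cc2 B kv" unfolding kv_def by (rule cc2_fp) (auto intro: Bs intro!: continuous_intros)
  have rh: "rho f y s = (\<integral>v. k0 (y, v) \<partial>lborel)" for y unfolding rho_def k0_def by simp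
  have eh: "ee s y = (\<integral>v. k2 (y, v) \<partial>lborel)" for y unfolding ee_def k2_def by (simp add: mult.commute)
  have jf: "jflux f y s = (\<integral>v. kv (y, v) \<partial>lborel)" for y unfolding jflux_def kv_def by simp
  have c\<rho>: "continuous_on UNIV (\<lambda>y. rho f y s)" unfolding rh by (rule cc2_cont_inner[OF c0])
  have ce: "continuous_on UNIV (ee s)" unfolding eh[abs_def] by (rule cc2_cont_inner[OF c2])
  have cj: "continuous_on UNIV (\<lambda>y. jflux f y s)" unfolding jf by (rule cc2_cont_inner[OF cv])
  have nn\<rho>: "0 \<le> rho f y s" for y unfolding rho_def by (intro integral_nonneg_AE AE_I2 fnn)
  have nne: "0 \<le> ee s y" for y unfolding ee_def by (intro integral_nonneg_AE AE_I2 mult_nonneg_nonneg fnn) auto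
  have sp\<rho>: "rho f y s = 0" if "norm y > B" for y unfolding rh using cc2_inner_zero[OF c0 that] .
  have spe: "ee s y = 0" if "norm y > B" for y unfolding eh using cc2_inner_zero[OF c2 that] .
  have spj: "jflux f y s = 0" if "norm y > B" for y unfolding jf using cc2_inner_zero[OF cv that] .
  define \<rho>t where "\<rho>t = (\<lambda>x. \<integral>w. \<phi> (x - w) * rho f w s \<partial>lborel)"
  define q where "q = (\<lambda>x. if \<rho>t x > 0 then rho f x s / \<rho>t x else 0)"
  have \<rho>t_eq: "rho_tilde \<phi> f x s = \<rho>t x" for x unfolding rho_tilde_def \<rho>t_def ..
  have \<rho>t_nn: "\<rho>t x \<ge> 0" for x unfolding \<rho>t_def by (intro integral_nonneg_AE AE_I2 mult_nonneg_nonneg \<phi>nn nn\<rho>)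
  have cov: "(\<integral>\<^sup>+x. ennreal (q x * Et s x) \<partial>lborel) \<le> ennreal (Ap * (\<integral>y. ee s y \<partial>lborel))"
    unfolding q_def \<rho>t_def Et_def Ap_def by (rule covering[where B=B, OF c\<rho> nn\<rho> sp\<rho> ce nne spe])
  have ptw: "Pf s x \<le> q x * Et s x" for x
  proof (cases "\<rho>t x > 0")
    case True
    let ?a = "\<integral>y. \<phi> (x - y) *\<^sub>R jflux f y s \<partial>lborel"
    have U: "u_tilde \<phi> f x s = (1 / \<rho>t x) *\<^sub>R ?a" using True by (simp add: u_tilde_def \<rho>t_eq)
    have cs: "norm ?a ^ 2 \<le> \<rho>t x * Et s x" using CS[OF Bs, where x=x] True by (simp add: \<rho>t_eq)
    have "norm (u_tilde \<phi> f x s) ^ 2 = norm ?a ^ 2 / \<rho>t x ^ 2"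
      unfolding U using True by (simp add: power_divide)
    also have "\<dots> \<le> \<rho>t x * Et s x / \<rho>t x ^ 2" using cs True by (intro divide_right_mono) auto
    also have "\<dots> = Et s x / \<rho>t x" using True by (simp add: power2_eq_square)
    finally have "Pf s x \<le> rho f x s * (Et s x / \<rho>t x)" unfolding Pf_def by (intro mult_left_mono nn\<rho>)
    then show ?thesis using True by (simp add: q_def)
  next
    case False
    then have "\<rho>t x = 0" using \<rho>t_nn[of x] by simp
    then show ?thesis by (simp add: Pf_def u_tilde_def \<rho>t_eq q_def)
  qed
  have Pnn: "Pf s x \<ge> 0" for x unfolding Pf_def by (intro mult_nonneg_nonneg nn\<rho>) simp
  have c\<rho>t: "continuous_on UNIV \<rho>t"
  proof -
    have "continuous_on UNIV (\<lambda>x. \<integral>w. (\<lambda>p. \<phi> (fst p - snd p) * rho f (snd p) s) (x, w) \<partial>lborel)"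
    proof (rule param_cont[where B=B])
      show "continuous_on (UNIV \<times> UNIV) (\<lambda>p::(real^'d)\<times>(real^'d). \<phi> (fst p - snd p) * rho f (snd p) s)"
        by (simp, intro continuous_intros cont_comp_UNIV[OF c\<phi>] cont_comp_UNIV[OF c\<rho>])
    qed (auto simp: sp\<rho>)
    then show ?thesis unfolding \<rho>t_def by simp
  qed
  have ca: "continuous_on UNIV (\<lambda>x. \<integral>y. \<phi> (x - y) *\<^sub>R jflux f y s \<partial>lborel)"
  proof -
    have "continuous_on UNIV (\<lambda>x. \<integral>w. (\<lambda>p. \<phi> (fst p - snd p) *\<^sub>R jflux f (snd p) s) (x, w) \<partial>lborel)"
    proof (rule param_cont[where B=B])
      show "continuous_on (UNIV \<times> UNIV) (\<lambda>p::(real^'d)\<times>(real^'d). \<phi> (fst p - snd p) *\<^sub>R jflux f (snd p) s)"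
        by (simp, intro continuous_intros cont_comp_UNIV[OF c\<phi>] cont_comp_UNIV[OF cj])
    qed (auto simp: spj)
    then show ?thesis by simp
  qed
  have mP[measurable]: "Pf s \<in> borel_measurable lborel"
  proof -
    have [measurable]: "\<rho>t \<in> borel_measurable lborel" by (simp add: borel_measurable_continuous_onI[OF c\<rho>t])
    have [measurable]: "(\<lambda>x. \<integral>y. \<phi> (x - y) *\<^sub>R jflux f y s \<partial>lborel) \<in> borel_measurable lborel"
      by (simp add: borel_measurable_continuous_onI[OF ca])
    have [measurable]: "(\<lambda>x. rho f x s) \<in> borel_measurable lborel" by (simp add: borel_measurable_continuous_onI[OF c\<rho>])
    show ?thesis unfolding Pf_def[abs_def] u_tilde_def \<rho>t_eq by measurable
  qed
  have le: "(\<integral>\<^sup>+x. ennreal (Pf s x) \<partial>lborel) \<le> ennreal (Ap * (\<integral>y. ee s y \<partial>lborel))"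
    by (rule order_trans[OF nn_integral_mono cov]) (simp add: ennreal_leI ptw)
  show "integrable lborel (Pf s)"
    by (rule integrableI_nonneg) (use le Pnn in \<open>auto simp: less_top[symmetric] top_unique\<close>)
  then have "ennreal (\<integral>x. Pf s x \<partial>lborel) \<le> ennreal (Ap * (\<integral>y. ee s y \<partial>lborel))"
    using le by (subst nn_integral_eq_integral[symmetric]) (auto simp: Pnn)
  moreover have "Ap * (\<integral>y. ee s y \<partial>lborel) \<ge> 0" using Ap_nn nne by (simp add: integral_nonneg_AE)
  ultimately show "(\<integral>x. Pf s x \<partial>lborel) \<le> Ap * (\<integral>y. ee s y \<partial>lborel)" by (simp add: ennreal_le_iff)
qed

end

lemma inner_le_half: "v \<bullet> U \<le> (norm v ^ 2 + norm U ^ 2) / 2" for v U :: "'a::real_inner"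
proof -
  have "0 \<le> norm (v - U) ^ 2" by simp
  also have "norm (v - U) ^ 2 = norm v ^ 2 - 2 * (v \<bullet> U) + norm U ^ 2"
    by (simp add: power2_norm_eq_inner inner_diff_left inner_diff_right inner_commute)
  finally show ?thesis by simp
qed

lemma gronwall:
  fixes E :: "real \<Rightarrow> real"
  assumes t: "t \<ge> 0" and c: "continuous_on {0..t} E"
    and d: "\<And>s. 0 < s \<Longrightarrow> s < t \<Longrightarrow> \<exists>D. (E has_real_derivative D) (at s) \<and> D \<le> A * E s"
  shows "E t \<le> E 0 * exp (A * t)"
proof -
  define g where "g = (\<lambda>s. E s * exp (- A * s))"
  have "g 0 \<ge> g t"
  proof (rule DERIV_nonpos_imp_decreasing_open[OF t])
    fix s assume s: "0 < s" "s < t"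
    obtain D where D: "(E has_real_derivative D) (at s)" "D \<le> A * E s" using d[OF s] by blast
    have "(g has_real_derivative (D * exp (- A * s) + E s * (- A * exp (- A * s)))) (at s)"
      unfolding g_def by (auto intro!: derivative_eq_intros D(1))
    moreover have "D * exp (- A * s) + E s * (- A * exp (- A * s)) \<le> 0"
    proof -
      have "D * exp (- A * s) + E s * (- A * exp (- A * s)) = (D - A * E s) * exp (- A * s)" by (simp add: algebra_simps)
      also have "\<dots> \<le> 0" using D(2) by (intro mult_nonpos_nonneg) auto
      finally show ?thesis .
    qed
    ultimately show "\<exists>y. (g has_real_derivative y) (at s) \<and> y \<le> 0" by blast
  next
    show "continuous_on {0..t} g" unfolding g_def by (intro continuous_intros c)
  qed
  then have "E t * exp (- A * t) \<le> E 0" by (simp add: g_def)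
  then have "E t * exp (- A * t) * exp (A * t) \<le> E 0 * exp (A * t)" by (intro mult_right_mono) auto
  then show ?thesis by (simp add: exp_minus field_simps)
qed

context setting begin

definition "Afin = 3 ^ CARD('d) * (Sphi / mphi) * (R / r) ^ CARD('d)"

lemma Ap_le: "Ap \<le> Afin"
proof -
  have "(2*R + r)/r \<le> 3 * (R / r)" using r_lt_R r by (simp add: field_simps)
  then have "((2*R + r)/r) ^ CARD('d) \<le> (3 * (R / r)) ^ CARD('d)"
    using r R by (intro power_mono) auto
  then have "Sphi * (((2*R + r)/r) ^ CARD('d) / mphi) \<le> Sphi * ((3 * (R / r)) ^ CARD('d) / mphi)"
    using Sphi(1) mphi(1) by (intro mult_left_mono divide_right_mono) auto
  then show ?thesis unfolding Ap_def Afin_def by (simp add: power_mult_distrib field_simps)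
qed

lemma J_bound:
  assumes Bs: "\<And>x v. norm x > B \<or> norm v > B \<Longrightarrow> f x v s = 0"
  shows "J s x \<le> Pf s x / 2 - ee s x / 2"
proof -
  let ?U = "u_tilde \<phi> f x s"
  have cf: "continuous_on UNIV (\<lambda>v. f x v s)" using cont_slice[OF cont_f, where x=x] by simp
  have i1: "integrable lborel (\<lambda>v. f x v s)"
    by (rule int_cc[where R=B]) (use cf Bs in auto)
  have i2: "integrable lborel (\<lambda>v. norm v ^ 2 * f x v s)"
    by (rule int_cc[where R=B]) (intro continuous_intros cf, use Bs in simp)
  have i3: "integrable lborel (\<lambda>v. (v \<bullet> ?U - norm v ^ 2) * f x v s)"
    by (rule int_cc[where R=B]) (intro continuous_intros cf, use Bs in simp)
  have "J s x \<le> (\<integral>v. (norm ?U ^ 2 / 2) * f x v s - (1/2) * (norm v ^ 2 * f x v s) \<partial>lborel)"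
    unfolding J_def
  proof (rule integral_mono[OF i3])
    show "integrable lborel (\<lambda>v. (norm ?U ^ 2 / 2) * f x v s - (1/2) * (norm v ^ 2 * f x v s))"
      using i1 i2 by auto
    fix v :: "real^'d"
    have "(v \<bullet> ?U - norm v ^ 2) * f x v s \<le> (norm ?U ^ 2 / 2 - norm v ^ 2 / 2) * f x v s"
      using inner_le_half[of v ?U] fnn[of x v s] by (intro mult_right_mono) auto
    then show "(v \<bullet> ?U - norm v ^ 2) * f x v s \<le> (norm ?U ^ 2 / 2) * f x v s - (1/2) * (norm v ^ 2 * f x v s)"
      by (simp add: algebra_simps)
  qed
  also have "\<dots> = (norm ?U ^ 2 / 2) * rho f x s - (1/2) * ee s x"
    unfolding rho_def ee_def using i1 i2 by simp
  also have "\<dots> = Pf s x / 2 - ee s x / 2" unfolding Pf_def by (simp add: algebra_simps)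
  finally show ?thesis .
qed

lemma e_le_E:
  assumes Bs: "\<And>x v. norm x > B \<or> norm v > B \<Longrightarrow> f x v s = 0"
  shows "(\<integral>y. ee s y \<partial>lborel) \<le> 2 * energy \<Phi> f s"
proof -
  define k2 where "k2 = (\<lambda>z::(real^'d)\<times>(real^'d). f (fst z) (snd z) s *\<^sub>R norm (snd z) ^ 2)"
  have c2: "cc2 B k2" unfolding k2_def by (rule cc2_fp) (auto intro: Bs intro!: continuous_intros)
  have "(\<integral>y. ee s y \<partial>lborel) = (\<integral>z. k2 z \<partial>lborel)"
    unfolding ee_def using cc2_fubini[OF c2] by (simp add: k2_def mult.commute)
  also have "\<dots> \<le> (\<integral>z. 2 * (W z * f (fst z) (snd z) s) \<partial>lborel)"
  proof (rule integral_mono)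
    show "integrable lborel k2" by (rule cc2_int_Z[OF c2])
    show "integrable lborel (\<lambda>z. 2 * (W z * f (fst z) (snd z) s))"
    proof (rule int_cc[where R="2*B"])
      show "continuous_on UNIV (\<lambda>z. 2 * (W z * f (fst z) (snd z) s))" by (intro continuous_intros cW cont_f)
      show "2 * (W z * f (fst z) (snd z) s) = 0" if "2 * B < norm z" for z
        using Bs[OF norm_z_big[OF that]] by simp
    qed
    fix z :: "(real^'d)\<times>(real^'d)"
    show "k2 z \<le> 2 * (W z * f (fst z) (snd z) s)"
      unfolding k2_def W_def using \<Phi>nn[of "fst z"] fnn[of "fst z" "snd z" s]
      by (simp add: algebra_simps)
  qed
  also have "\<dots> = 2 * energy \<Phi> f s" unfolding energy_W by simp
  finally show ?thesis .
qed

lemma energy_nn: "energy \<Phi> f s \<ge> 0"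
  unfolding energy_W W_def by (intro integral_nonneg_AE AE_I2 mult_nonneg_nonneg fnn add_nonneg_nonneg \<Phi>nn) auto

lemma Eprime_le:
  assumes "0 < s"
  shows "(\<integral>x. J s x \<partial>lborel) \<le> Afin * energy \<Phi> f s"
proof -
  obtain B where B: "B > 0" "\<And>x v t. 0 \<le> t \<Longrightarrow> t \<le> s \<Longrightarrow> (norm x > B \<or> norm v > B) \<Longrightarrow> f x v t = 0"
    using suppB[of s] assms by auto
  have Bs: "\<And>x v. norm x > B \<or> norm v > B \<Longrightarrow> f x v s = 0" using B(2) assms by auto
  note PB = P_bound[where B=B, OF Bs]
  have ie: "integrable lborel (ee s)"
  proof -
    define k2 where "k2 = (\<lambda>z::(real^'d)\<times>(real^'d). f (fst z) (snd z) s *\<^sub>R norm (snd z) ^ 2)"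
    have c2: "cc2 B k2" unfolding k2_def by (rule cc2_fp) (auto intro: Bs intro!: continuous_intros)
    have "integrable lborel (\<lambda>y. (1::real) *\<^sub>R (\<integral>v. k2 (y, v) \<partial>lborel))"
      by (rule cc2_conv_int[OF c2]) (rule continuous_on_const)
    then show ?thesis unfolding ee_def[abs_def] k2_def by (simp add: mult.commute)
  qed
  have e_nn: "0 \<le> (\<integral>y. ee s y \<partial>lborel)"
    unfolding ee_def by (intro integral_nonneg_AE AE_I2 mult_nonneg_nonneg fnn) auto
  have "(\<integral>x. J s x \<partial>lborel) \<le> (\<integral>x. Pf s x / 2 - ee s x / 2 \<partial>lborel)"
    by (rule integral_mono[OF Eprime(2)[OF assms]]) (use PB(1) ie J_bound[where B=B, OF Bs] in auto)
  also have "\<dots> = (\<integral>x. Pf s x \<partial>lborel) / 2 - (\<integral>x. ee s x \<partial>lborel) / 2"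
    using PB(1) ie by simp
  also have "\<dots> \<le> Ap * (\<integral>y. ee s y \<partial>lborel) / 2"
    using PB(2) e_nn by simp
  also have "\<dots> \<le> Ap * energy \<Phi> f s"
    using mult_left_mono[OF e_le_E[where B=B, OF Bs] Ap_nn] by (simp add: algebra_simps)
  also have "\<dots> \<le> Afin * energy \<Phi> f s"
    using Ap_le energy_nn by (intro mult_right_mono) auto
  finally show ?thesis .
qed

lemma energy_cont:
  assumes "T \<ge> 0"
  shows "continuous_on {0..T} (\<lambda>s. energy \<Phi> f s)"
proof -
  obtain B where B: "B > 0" "\<And>x v t. 0 \<le> t \<Longrightarrow> t \<le> T \<Longrightarrow> (norm x > B \<or> norm v > B) \<Longrightarrow> f x v t = 0"
    using suppB[OF assms] by auto
  have "continuous_on {0..T} (\<lambda>s. \<integral>z. (\<lambda>p. W (snd p) * f (fst (snd p)) (snd (snd p)) (fst p)) (s, z) \<partial>lborel)"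
  proof (rule param_cont[where B="2*B"])
    show "continuous_on ({0..T} \<times> UNIV) (\<lambda>p::real \<times> ((real^'d) \<times> (real^'d)). W (snd p) * f (fst (snd p)) (snd (snd p)) (fst p))"
    proof -
      have "continuous_on UNIV (\<lambda>p::real \<times> ((real^'d) \<times> (real^'d)). F (snd p, fst p))"
        by (rule cont_comp_UNIV[OF cF]) (intro continuous_intros)
      then have "continuous_on UNIV (\<lambda>p::real \<times> ((real^'d) \<times> (real^'d)). W (snd p) * f (fst (snd p)) (snd (snd p)) (fst p))"
        by (intro continuous_intros cont_comp_UNIV[OF cW]) (simp_all add: F_def case_prod_beta)
      then show ?thesis by (rule continuous_on_subset) auto
    qed
    show "W (snd (y, v)) * f (fst (snd (y, v))) (snd (snd (y, v))) (fst (y, v)) = 0"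
      if "y \<in> {0..T}" "2 * B < norm v" for y v
      using B(2)[of y "fst v" "snd v"] that norm_z_big[OF that(2)] by auto
  qed simp
  then show ?thesis unfolding energy_W by simp
qed

theorem main_loc:
  assumes "t \<ge> 0"
  shows "energy \<Phi> f t \<le> energy \<Phi> f 0 * exp (Afin * t)"
proof (rule gronwall[OF assms energy_cont[OF assms]])
  fix s :: real assume s: "0 < s" "s < t"
  show "\<exists>D. ((\<lambda>s. energy \<Phi> f s) has_real_derivative D) (at s) \<and> D \<le> Afin * energy \<Phi> f s"
    using Eprime(1)[OF s(1)] Eprime_le[OF s(1)] by blast
qed

end

theorem mainTheorem16:
  "\<exists>K>0. \<forall>(\<phi> :: real^'d \<Rightarrow> real) r R.
     smooth_fun \<phi> \<and> (\<forall>x. \<phi> x \<ge> 0) \<and> r > 0 \<and> R > 0 \<and>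
     (\<forall>x. norm x \<le> r \<longrightarrow> \<phi> x > 0) \<and> (\<forall>x. norm x \<ge> R \<longrightarrow> \<phi> x = 0) \<longrightarrow>
     (\<forall>(\<Phi> :: real^'d \<Rightarrow> real) (f :: real^'d \<Rightarrow> real^'d \<Rightarrow> real \<Rightarrow> real).
        smooth_fun \<Phi> \<and> filterlim \<Phi> at_top at_infinity \<and> (\<forall>x. \<Phi> x \<ge> 0) \<and>
        smooth_fun (\<lambda>((x, v), t). f x v t) \<and>
        (\<forall>x v t. f x v t \<ge> 0) \<and>
        (\<forall>T\<ge>0. \<exists>B. \<forall>x v t. 0 \<le> t \<and> t \<le> T \<and> f x v t \<noteq> 0 \<longrightarrow> norm x \<le> B \<and> norm v \<le> B) \<and>
        kinetic_eq \<phi> \<Phi> f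
        \<longrightarrow>
        (\<forall>t\<ge>0. energy \<Phi> f t \<le>
           energy \<Phi> f 0 *
             exp (K * (Sup (\<phi> ` ball 0 R) / Inf (\<phi> ` ball 0 r)) * (R / r) ^ CARD('d) * t)))"
  proof (rule exI[of _ "3 ^ CARD('d) :: real"], intro conjI allI impI)
  show "(0::real) < 3 ^ CARD('d)" by simp
next
  fix \<phi> :: "real^'d \<Rightarrow> real" and r R :: real and \<Phi> :: "real^'d \<Rightarrow> real"
    and f :: "real^'d \<Rightarrow> real^'d \<Rightarrow> real \<Rightarrow> real" and t :: real
  assume h1: "smooth_fun \<phi> \<and> (\<forall>x. \<phi> x \<ge> 0) \<and> r > 0 \<and> R > 0 \<and>
     (\<forall>x. norm x \<le> r \<longrightarrow> \<phi> x > 0) \<and> (\<forall>x. norm x \<ge> R \<longrightarrow> \<phi> x = 0)"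
    and h2: "smooth_fun \<Phi> \<and> filterlim \<Phi> at_top at_infinity \<and> (\<forall>x. \<Phi> x \<ge> 0) \<and>
        smooth_fun (\<lambda>((x, v), t). f x v t) \<and>
        (\<forall>x v t. f x v t \<ge> 0) \<and>
        (\<forall>T\<ge>0. \<exists>B. \<forall>x v t. 0 \<le> t \<and> t \<le> T \<and> f x v t \<noteq> 0 \<longrightarrow> norm x \<le> B \<and> norm v \<le> B) \<and>
        kinetic_eq \<phi> \<Phi> f"
    and t: "0 \<le> t"
  interpret setting \<phi> r R \<Phi> f
    by unfold_locales (use h1 h2 in auto)
  show "energy \<Phi> f t \<le> energy \<Phi> f 0 *
             exp (3 ^ CARD('d) * (Sup (\<phi> ` ball 0 R) / Inf (\<phi> ` ball 0 r)) * (R / r) ^ CARD('d) * t)"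
    using main_loc[OF t] unfolding Afin_def Sphi_def mphi_def .
qed

end
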